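(* Let $p>6$ and assume $h$ satisfies $(h_1)$. If $u\in H^{s,2}$ satisfies $u^+\neq0$ and $u^-\neq0$, then there exists a unique pair $(r_u,t_u)\in(0,\infty)\times(0,\infty)$ such that $r_uu^++t_uu^-\in\mathcal{M}_{s,2}$.
   Context: Let $d\ge 1$ and $s\in(0,1)$. $\mathbb{Z}^d$ is the integer lattice graph (vertices $\mathbb{Z}^d$, edges between $x,y$ with $\sum_i|x_i-y_i|=1$), with graph distance $|x-y|=\sum_{i=1}^d|x_i-y_i|$ and counting measure $\mu$; $\int_{\mathbb{Z}^d}f\,d\mu:=\sum_{x\in\mathbb{Z}^d}f(x)$. The weight $w_s(x,y)$, defined for $x\neq y$, is symmetric, positive, and satisfies $c_{s,d}|x-y|^{-d-2s}\le w_s(x,y)\le C_{s,d}|x-y|^{-d-2s}$ for some constants $0<c_{s,d}\le C_{s,d}$. For $u,v:\mathbb{Z}^d\to\mathbb{R}$ set $\nabla^s u\nabla^s v(x)=\frac12\sum_{y\neq x}w_s(x,y)(u(x)-u(y))(v(x)-v(y))$, $|\nabla^s u|^2(x)=\nabla^s u\nabla^s u(x)$, $\|\nabla^s u\|_2^2:=\int_{\mathbb{Z}^d}|\nabla^s u|^2d\mu$, and $(-\Delta)^s u(x)=\sum_{y\neq x}w_s(x,y)(u(x)-u(y))$; $\|u\|_q$ denotes the $\ell^q(\mathbb{Z}^d)$ norm. Fix constants $a,b>0$ and $p>2$. The potential $h:\mathbb{Z}^d\to\mathbb{R}$ may satisfy: $(h_1)$ there is $h_0>0$ with $h(x)\ge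 h_0$ for all $x$; $(h_2)$ there is $x_0\in\mathbb{Z}^d$ with $h(x)\to\infty$ as $|x-x_0|\to\infty$. $W^{s,2}(\mathbb{Z}^d)$ is the completion of finitely supported functions under $\|u\|_{W^{s,2}}^2=\int(|\nabla^s u|^2+u^2)d\mu$, and $H^{s,2}=\{u\in W^{s,2}:\int h u^2d\mu<\infty\}$ is the Hilbert space with inner product $\langle u,v\rangle_{H^{s,2}}=\int(a\nabla^s u\nabla^s v+huv)d\mu$ and norm $\|u\|_{H^{s,2}}$. Equation (E) is $\left(a+b\int_{\mathbb{Z}^d}|\nabla^s u|^2d\mu\right)(-\Delta)^s u+h(x)u=|u|^{p-2}u\log u^2$ on $\mathbb{Z}^d$ (with $|t|^{p-2}t\log t^2:=0$ at $t=0$). The energy is $J_{s,2}(u)=\frac12\|u\|_{H^{s,2}}^2+\frac b4\|\nabla^s u\|_2^4+\frac{2}{p^2}\int|u|^pd\mu-\frac1p\int|u|^p\log u^2d\mu$, a $C^1$ functional on $H^{s,2}$ with $\langle J_{s,2}'(u),\phi\rangle=\int(a\nabla^s u\nabla^s\phi+hu\phi)d\mu+b\|\nabla^s u\|_2^2\int\nabla^s u\nabla^s\phi\,d\mu-\int|u|^{p-2}u\phi\log u^2d\mu$. A weak solution is a critical point of $J_{s,2}$; nontrivial means $\neq0$. $u^+=\max\{u,0\}$, $u^-=\min\{u,0\}$. Nehari manifold: $\mathcal{N}_{s,2}=\{v\in H^{s,2}\setminus\{0\}:\langle J_{s,2}'(v),v\rangle=0\}$. Sign-changing Nehari set: $\mathcal{M}_{s,2}=\{v\in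 H^{s,2}: v^\pm\neq0,\ \langle J_{s,2}'(v),v^+\rangle=\langle J_{s,2}'(v),v^-\rangle=0\}$. A ground state solution is a nontrivial weak solution $u$ with $J_{s,2}(u)=\inf_{\mathcal{N}_{s,2}}J_{s,2}$; a sign-changing solution is a weak solution $u$ with $u^\pm\not\equiv0$; a ground state sign-changing solution is a sign-changing solution $u$ with $J_{s,2}(u)=\inf_{\mathcal{M}_{s,2}}J_{s,2}$. For $u\in H^{s,2}$, $K(u)=\sum_{x}\sum_{y\neq x}w_s(x,y)[u^+(y)u^-(x)+u^-(y)u^+(x)]$. *)

theory Defs
  imports "HOL-Analysis.Analysis"
begin

type_synonym 'd lat = "int ^ 'd"

definition ldist :: "'d::finite lat \<Rightarrow> 'd lat \<Rightarrow> real" where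
  "ldist x y = (\<Sum>i\<in>UNIV. real_of_int \<bar>x $ i - y $ i\<bar>)"

definition admissible_weight :: "real \<Rightarrow> ('d::finite lat \<Rightarrow> 'd lat \<Rightarrow> real) \<Rightarrow> bool" where
  "admissible_weight s w \<longleftrightarrow>
     (\<forall>x y. x \<noteq> y \<longrightarrow> w x y = w y x \<and> 0 < w x y) \<and>
     (\<exists>c C. 0 < c \<and> c \<le> C \<and>
        (\<forall>x y. x \<noteq> y \<longrightarrow>
            c * ldist x y powr (- (real CARD('d) + 2 * s)) \<le> w x y \<and>
            w x y \<le> C * ldist x y powr (- (real CARD('d) + 2 * s))))"

definition grad_sq :: "('d::finite lat \<Rightarrow> 'd lat \<Rightarrow> real) \<Rightarrow> ('d lat \<Rightarrow> real) \<Rightarrow> 'd lat \<Rightarrow> ennreal" where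
  "grad_sq w u x = (\<Sum>\<^sub>\<infinity>y\<in>UNIV - {x}. ennreal (w x y * (u x - u y)^2 / 2))"

definition W_norm_sq :: "('d::finite lat \<Rightarrow> 'd lat \<Rightarrow> real) \<Rightarrow> ('d lat \<Rightarrow> real) \<Rightarrow> ennreal" where
  "W_norm_sq w u = (\<Sum>\<^sub>\<infinity>x\<in>UNIV. grad_sq w u x + ennreal ((u x)^2))"

text \<open>W^{s,2}: completion of finitely supported functions, realised as the functions
  that are W-norm limits of finitely supported functions.\<close>
definition W_space :: "('d::finite lat \<Rightarrow> 'd lat \<Rightarrow> real) \<Rightarrow> ('d lat \<Rightarrow> real) set" where
  "W_space w = {u. \<exists>\<phi> :: nat \<Rightarrow> 'd lat \<Rightarrow> real.
      (\<forall>n. finite {x. \<phi> n x \<noteq> 0}) \<and>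
      ((\<lambda>n. W_norm_sq w (\<lambda>x. \<phi> n x - u x)) \<longlongrightarrow> 0) sequentially}"

definition H_space :: "('d::finite lat \<Rightarrow> 'd lat \<Rightarrow> real) \<Rightarrow> ('d lat \<Rightarrow> real) \<Rightarrow> ('d lat \<Rightarrow> real) set" where
  "H_space w h = {u \<in> W_space w. (\<Sum>\<^sub>\<infinity>x\<in>UNIV. ennreal (h x * (u x)^2)) < \<infinity>}"

definition grad_prod :: "('d::finite lat \<Rightarrow> 'd lat \<Rightarrow> real) \<Rightarrow> ('d lat \<Rightarrow> real) \<Rightarrow> ('d lat \<Rightarrow> real) \<Rightarrow> 'd lat \<Rightarrow> real" where
  "grad_prod w u v x = (1/2) * (\<Sum>\<^sub>\<infinity>y\<in>UNIV - {x}. w x y * (u x - u y) * (v x - v y))"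

definition grad_norm_sq :: "('d::finite lat \<Rightarrow> 'd lat \<Rightarrow> real) \<Rightarrow> ('d lat \<Rightarrow> real) \<Rightarrow> real" where
  "grad_norm_sq w u = (\<Sum>\<^sub>\<infinity>x\<in>UNIV. grad_prod w u u x)"

definition nonlin :: "real \<Rightarrow> real \<Rightarrow> real" where
  "nonlin p t = (if t = 0 then 0 else \<bar>t\<bar> powr (p - 2) * t * ln (t^2))"

definition Jderiv :: "real \<Rightarrow> real \<Rightarrow> real \<Rightarrow> ('d::finite lat \<Rightarrow> 'd lat \<Rightarrow> real) \<Rightarrow> ('d lat \<Rightarrow> real)
    \<Rightarrow> ('d lat \<Rightarrow> real) \<Rightarrow> ('d lat \<Rightarrow> real) \<Rightarrow> real" where
  "Jderiv a b p w h u \<phi> =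
     (\<Sum>\<^sub>\<infinity>x\<in>UNIV. a * grad_prod w u \<phi> x + h x * u x * \<phi> x)
     + b * grad_norm_sq w u * (\<Sum>\<^sub>\<infinity>x\<in>UNIV. grad_prod w u \<phi> x)
     - (\<Sum>\<^sub>\<infinity>x\<in>UNIV. nonlin p (u x) * \<phi> x)"

definition pos_part :: "('d lat \<Rightarrow> real) \<Rightarrow> 'd lat \<Rightarrow> real" where
  "pos_part u = (\<lambda>x. max (u x) 0)"

definition neg_part :: "('d lat \<Rightarrow> real) \<Rightarrow> 'd lat \<Rightarrow> real" where
  "neg_part u = (\<lambda>x. min (u x) 0)"

definition M_set :: "real \<Rightarrow> real \<Rightarrow> real \<Rightarrow> ('d::finite lat \<Rightarrow> 'd lat \<Rightarrow> real) \<Rightarrow> ('d lat \<Rightarrow> real)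
    \<Rightarrow> ('d lat \<Rightarrow> real) set" where
  "M_set a b p w h = {v \<in> H_space w h. pos_part v \<noteq> (\<lambda>_. 0) \<and> neg_part v \<noteq> (\<lambda>_. 0) \<and>
      Jderiv a b p w h v (pos_part v) = 0 \<and> Jderiv a b p w h v (neg_part v) = 0}"

end

theory Submission
  imports Defs
begin

definition Lam :: "real \<Rightarrow> real \<Rightarrow> real \<Rightarrow> real \<Rightarrow> real \<Rightarrow> real \<Rightarrow> real \<Rightarrow> real \<Rightarrow> real" where
  "Lam a b X Y G H r d = (a*(X+G*d)+H)/r^2 + b*(X + 2*G*d + Y*d^2)*(X+G*d)"

definition psi :: "real \<Rightarrow> real \<Rightarrow> real \<Rightarrow> real \<Rightarrow> real" where
  "psi p S L r = r powr (p-4) * (S * ln (r^2) + L)"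

definition phi :: "real \<Rightarrow> real \<Rightarrow> real \<Rightarrow> real \<Rightarrow> real \<Rightarrow> real \<Rightarrow> real \<Rightarrow> real \<Rightarrow> real \<Rightarrow> real \<Rightarrow> real \<Rightarrow> real" where
  "phi p a b X Y G H S L r t = a*(r^2*X + r*t*G) + r^2*H + b*(r^2*X + 2*r*t*G + t^2*Y)*(r^2*X + r*t*G)
      - r powr p * (S * ln (r^2) + L)"

lemma phi_Lam:
  assumes "r > 0"
  shows "phi p a b X Y G H S L r t = r^4 * (Lam a b X Y G H r (t/r) - psi p S L r)"
proof -
  have "r powr p = r^4 * r powr (p-4)"
    using assms by (simp add: powr_diff powr_realpow)
  then show ?thesis using assms
    unfolding phi_def Lam_def psi_def by (simp add: field_simps power2_eq_square power4_eq_xxxx)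
qed

lemma Lam_mono_d:
  assumes "0 \<le> d" "d \<le> d'" "0 \<le> X" "0 \<le> Y" "0 \<le> G" "0 \<le> a" "0 \<le> b" "r > 0"
  shows "Lam a b X Y G H r d \<le> Lam a b X Y G H r d'"
proof -
  have 1: "G*d \<le> G*d'" using assms by (simp add: mult_left_mono)
  have 2: "Y*d^2 \<le> Y*d'^2" using assms by (simp add: mult_left_mono power_mono)
  have "(a*(X+G*d)+H)/r^2 \<le> (a*(X+G*d')+H)/r^2"
    using 1 assms by (simp add: divide_right_mono mult_left_mono)
  moreover have "(X + 2*G*d + Y*d^2)*(X+G*d) \<le> (X + 2*G*d' + Y*d'^2)*(X+G*d')"
    apply (rule mult_mono) using 1 2 assms by (auto intro!: add_nonneg_nonneg mult_nonneg_nonneg)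
  hence "b*((X + 2*G*d + Y*d^2)*(X+G*d)) \<le> b*((X + 2*G*d' + Y*d'^2)*(X+G*d'))"
    using assms by (simp add: mult_left_mono)
  ultimately show ?thesis unfolding Lam_def by (simp add: mult.assoc)
qed

lemma Lam_mono_r:
  assumes "0 \<le> d" "0 \<le> X" "0 \<le> G" "0 \<le> a" "0 < H" "0 < r" "r < r'"
  shows "Lam a b X Y G H r' d < Lam a b X Y G H r d"
proof -
  have "0 \<le> a*(X+G*d)" using assms by simp
  hence "0 < a*(X+G*d)+H" using assms by linarith
  moreover have "r^2 < r'^2" using assms by (simp add: power_strict_mono)
  ultimately have "(a*(X+G*d)+H)/r'^2 < (a*(X+G*d)+H)/r^2"
    using assms by (intro divide_strict_left_mono) auto
  then show ?thesis unfolding Lam_def by simp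
qed

lemma Lam_pos:
  assumes "0 \<le> d" "0 \<le> X" "0 \<le> Y" "0 \<le> G" "0 \<le> a" "0 \<le> b" "0 < H" "0 < r"
  shows "0 < Lam a b X Y G H r d"
proof -
  have "0 \<le> a*(X+G*d)" using assms by simp
  hence "0 < a*(X+G*d)+H" using assms by linarith
  hence "0 < (a*(X+G*d)+H)/r^2" using assms by (intro divide_pos_pos) auto
  moreover have "0 \<le> b*(X + 2*G*d + Y*d^2)*(X+G*d)" using assms by simp
  ultimately show ?thesis unfolding Lam_def by simp
qed

lemma psi_key:
  assumes "0 < x" "x < y" "S > 0" "p > 4" "psi p S L x > 0"
  shows "psi p S L x < psi p S L y"
proof -
  have px: "x powr (p-4) > 0" using assms by simp
  hence l0: "S * ln (x^2) + L > 0" using assms unfolding psi_def by (simp add: zero_less_mult_iff)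
  have "ln (x^2) < ln (y^2)" using assms by (simp add: power_strict_mono)
  hence "S * ln (x^2) + L < S * ln (y^2) + L" using assms by simp
  moreover have "x powr (p-4) < y powr (p-4)" using assms by (intro powr_less_mono2) auto
  ultimately show ?thesis unfolding psi_def using px l0
    by (intro mult_strict_mono) auto
qed

lemma CMP:
  assumes "0 < x1" "0 < x2" "0 \<le> d2" "d2 \<le> d1"
    and "0 \<le> X" "0 \<le> Y" "0 \<le> G" "0 < a" "0 < b" "0 < H" "S > 0" "p > 4"
    and e1: "Lam a b X Y G H x1 d1 = psi p S L x1"
    and e2: "Lam a b X Y G H x2 d2 = psi p S L x2"
  shows "x2 \<le> x1"
proof (rule ccontr)
  assume "\<not> x2 \<le> x1" hence lt: "x1 < x2" by simp
  have "Lam a b X Y G H x2 d2 \<le> Lam a b X Y G H x2 d1"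
    using assms by (intro Lam_mono_d) auto
  also have "\<dots> < Lam a b X Y G H x1 d1"
    using assms lt by (intro Lam_mono_r) auto
  finally have A: "psi p S L x2 < psi p S L x1" using e1 e2 by simp
  have "0 < psi p S L x1" using e1 Lam_pos[of d1 X Y G a b H x1] assms by simp
  hence "psi p S L x1 < psi p S L x2" using psi_key assms lt by blast
  with A show False by simp
qed

lemma uniq_half:
  assumes "0 \<le> A" "0 \<le> B" "0 \<le> G" "0 < a" "0 < b" "0 < H1" "0 < H2" "S1 > 0" "S2 > 0" "p > 4"
    and pos: "0 < r1" "0 < t1" "0 < r2" "0 < t2"
    and s11: "phi p a b A B G H1 S1 L1 r1 t1 = 0" and s12: "phi p a b B A G H2 S2 L2 t1 r1 = 0"
    and s21: "phi p a b A B G H1 S1 L1 r2 t2 = 0" and s22: "phi p a b B A G H2 S2 L2 t2 r2 = 0"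
    and ord: "r2 * t1 \<le> r1 * t2"
  shows "r1 = r2 \<and> t1 = t2"
proof -
  have e11: "Lam a b A B G H1 r1 (t1/r1) = psi p S1 L1 r1" using s11 phi_Lam[of r1] pos by simp
  have e12: "Lam a b B A G H2 t1 (r1/t1) = psi p S2 L2 t1" using s12 phi_Lam[of t1] pos by simp
  have e21: "Lam a b A B G H1 r2 (t2/r2) = psi p S1 L1 r2" using s21 phi_Lam[of r2] pos by simp
  have e22: "Lam a b B A G H2 t2 (r2/t2) = psi p S2 L2 t2" using s22 phi_Lam[of t2] pos by simp
  have c: "r2/t2 \<le> r1/t1" using ord pos by (simp add: divide_simps mult.commute)
  have d: "t1/r1 \<le> t2/r2" using ord pos by (simp add: divide_simps mult.commute)
  have T: "t2 \<le> t1" by (rule CMP[OF _ _ _ c _ _ _ _ _ _ _ _ e12 e22]) (use assms in auto)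
  have R: "r1 \<le> r2" by (rule CMP[OF _ _ _ d _ _ _ _ _ _ _ _ e21 e11]) (use assms in auto)
  have "r1 * t2 \<le> r2 * t2" using R pos by (simp add: mult_right_mono)
  moreover have "r2 * t2 \<le> r2 * t1" using T pos by (simp add: mult_left_mono)
  ultimately have "r1 * t2 = r2 * t2" "r2 * t2 = r2 * t1" using ord by linarith+
  then show ?thesis using pos by auto
qed

lemma phi_low:
  assumes "0 \<le> A" "0 \<le> B" "0 \<le> G" "0 < a" "0 < b" "0 < H" "S > 0" "p \<ge> 3"
    and "0 < r" "r \<le> 1" "r * \<bar>L\<bar> < H" "0 < t"
  shows "phi p a b A B G H S L r t > 0"
proof -
  have n1: "0 \<le> a*(r^2*A + r*t*G) + b*(r^2*A + 2*r*t*G + t^2*B)*(r^2*A + r*t*G)"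
    using assms by (intro add_nonneg_nonneg mult_nonneg_nonneg) auto
  have "ln (r^2) \<le> 0" using assms by (simp add: power_le_one)
  hence "S * ln (r^2) + L \<le> \<bar>L\<bar>" using assms
    by (smt (verit) mult_nonneg_nonpos)
  hence "r powr p * (S * ln (r^2) + L) \<le> r powr p * \<bar>L\<bar>"
    by (intro mult_left_mono) auto
  have eq: "r powr p = r^2 * r powr (p-2)" using assms by (simp add: powr_diff powr_realpow)
  have "r powr (p-2) \<le> r powr 1" using assms by (intro powr_mono') auto
  hence "r^2 * r powr (p-2) * \<bar>L\<bar> \<le> r^2 * r * \<bar>L\<bar>" using assms
    by (intro mult_right_mono mult_left_mono) auto
  also have "r^2 * r * \<bar>L\<bar> < r^2 * H" using assms by simp
  finally have "r powr p * (S * ln (r^2) + L) < r^2 * H" using \<open>r powr p * (S * ln (r^2) + L) \<le> r powr p * \<bar>L\<bar>\<close> eq by simp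
  then show ?thesis using n1 unfolding phi_def by simp
qed

lemma phi_high:
  assumes "0 \<le> A" "0 \<le> B" "0 \<le> G" "0 < a" "0 < b" "0 < H" "S > 0" "p \<ge> 5"
    and "1 \<le> R" "a*(A+G)+H + b*(A+2*G+B)*(A+G) < R" "1 \<le> S * ln (R^2) + L" "0 < t" "t \<le> R"
  shows "phi p a b A B G H S L R t < 0"
proof -
  have R2: "R^2 \<le> R^4" using assms by (simp add: power_increasing)
  have tR: "R*t \<le> R^2" using assms by (simp add: power2_eq_square mult_left_mono)
  have t2: "t^2 \<le> R^2" using assms by (simp add: power_mono)
  have "R*t*G \<le> R^2*G" using tR assms by (simp add: mult_right_mono)
  hence a1: "a*(R^2*A + R*t*G) \<le> a*(R^2*(A+G))"
    using assms by (intro mult_left_mono) (auto simp: algebra_simps)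
  also have "\<dots> \<le> a*(R^4*(A+G))" using assms R2 by (intro mult_left_mono mult_right_mono) auto
  finally have a1: "a*(R^2*A + R*t*G) \<le> R^4*(a*(A+G))" by (simp add: mult.left_commute)
  have h1: "R^2*H \<le> R^4*H" using R2 assms by (simp add: mult_right_mono)
  have n1: "R^2*A + 2*R*t*G + t^2*B \<le> R^2*(A+2*G+B)"
  proof -
    have "2*R*t*G \<le> 2*R^2*G" using tR assms by (simp add: mult_right_mono)
    moreover have "t^2*B \<le> R^2*B" using t2 assms by (simp add: mult_right_mono)
    ultimately show ?thesis by (simp add: algebra_simps)
  qed
  have "R*t*G \<le> R^2*G" using tR assms by (simp add: mult_right_mono)
  hence n2: "R^2*A + R*t*G \<le> R^2*(A+G)" by (simp add: algebra_simps)
  have "(R^2*A + 2*R*t*G + t^2*B)*(R^2*A + R*t*G) \<le> (R^2*(A+2*G+B))*(R^2*(A+G))"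
    using n1 n2 assms by (intro mult_mono) auto
  also have "\<dots> = R^4*((A+2*G+B)*(A+G))" by (simp add: algebra_simps power4_eq_xxxx power2_eq_square)
  finally have b1: "b*(R^2*A + 2*R*t*G + t^2*B)*(R^2*A + R*t*G) \<le> R^4*(b*(A+2*G+B)*(A+G))"
    using assms by (simp add: mult.assoc mult_left_mono mult.left_commute)
  have lhs: "a*(R^2*A + R*t*G) + R^2*H + b*(R^2*A + 2*R*t*G + t^2*B)*(R^2*A + R*t*G)
      \<le> R^4*(a*(A+G)+H + b*(A+2*G+B)*(A+G))"
    using a1 h1 b1 by (simp add: algebra_simps)
  also have "\<dots> < R^4 * R" using assms by simp
  also have "R^4 * R = R powr 5" using assms by (simp add: powr_realpow power_Suc2[symmetric] del: power_Suc)
  also have "R powr 5 \<le> R powr p" using assms by (intro powr_mono) auto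
  also have "R powr p \<le> R powr p * (S * ln (R^2) + L)" using assms by simp
  finally show ?thesis unfolding phi_def by simp
qed

lemma phi_cont1: "continuous_on {z::real\<times>real. fst z > 0} (\<lambda>z. phi p a b X Y G H S L (fst z) (snd z))"
  unfolding phi_def by (intro continuous_intros) auto
lemma phi_cont2: "continuous_on {z::real\<times>real. snd z > 0} (\<lambda>z. phi p a b X Y G H S L (snd z) (fst z))"
  unfolding phi_def by (intro continuous_intros) auto
lemma clamp_cont: "continuous_on K f \<Longrightarrow> continuous_on K (\<lambda>z. max (d::real) (min R (f z)))"
  by (intro continuous_intros)

lemma exist_sol:
  assumes "0 \<le> A" "0 \<le> B" "0 \<le> G" "0 < a" "0 < b" "0 < H1" "0 < H2" "S1 > 0" "S2 > 0" "p \<ge> 5"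
  shows "\<exists>r t. 0 < r \<and> 0 < t \<and> phi p a b A B G H1 S1 L1 r t = 0 \<and> phi p a b B A G H2 S2 L2 t r = 0"
proof -
  define \<delta> where "\<delta> = min 1 (min (H1/(2*(\<bar>L1\<bar>+1))) (H2/(2*(\<bar>L2\<bar>+1))))"
  have d0: "0 < \<delta>" "\<delta> \<le> 1" using assms by (auto simp: \<delta>_def)
  have dL1: "\<delta> * \<bar>L1\<bar> < H1"
  proof -
    have "\<delta> \<le> H1/(2*(\<bar>L1\<bar>+1))" by (simp add: \<delta>_def)
    hence "\<delta> * \<bar>L1\<bar> \<le> H1/(2*(\<bar>L1\<bar>+1)) * \<bar>L1\<bar>" by (rule mult_right_mono) auto
    also have "\<dots> < H1" using assms apply (simp add: field_simps) by (simp add: add_nonneg_pos)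
    finally show ?thesis .
  qed
  have dL2: "\<delta> * \<bar>L2\<bar> < H2"
  proof -
    have "\<delta> \<le> H2/(2*(\<bar>L2\<bar>+1))" by (simp add: \<delta>_def)
    hence "\<delta> * \<bar>L2\<bar> \<le> H2/(2*(\<bar>L2\<bar>+1)) * \<bar>L2\<bar>" by (rule mult_right_mono) auto
    also have "\<dots> < H2" using assms apply (simp add: field_simps) by (simp add: add_nonneg_pos)
    finally show ?thesis .
  qed
  define c1 where "c1 = a*(A+G)+H1 + b*(A+2*G+B)*(A+G)"
  define c2 where "c2 = a*(B+G)+H2 + b*(B+2*G+A)*(B+G)"
  define R where "R = max 1 (max (c1+1) (max (c2+1) (max (exp((\<bar>L1\<bar>+1)/(2*S1))) (exp((\<bar>L2\<bar>+1)/(2*S2))))))"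
  have R1: "1 \<le> R" by (simp add: R_def)
  have Rc1: "c1 < R" "c2 < R" unfolding R_def by linarith+
  have lnR: "1 \<le> S1 * ln (R^2) + L1" "1 \<le> S2 * ln (R^2) + L2"
  proof -
    have lnR2: "ln (R^2) = 2 * ln R" using R1 by (simp add: ln_realpow)
    have e1: "exp((\<bar>L1\<bar>+1)/(2*S1)) \<le> R" "exp((\<bar>L2\<bar>+1)/(2*S2)) \<le> R" unfolding R_def by linarith+
    have "(\<bar>L1\<bar>+1)/(2*S1) \<le> ln R" using e1(1) R1 by (subst ln_ge_iff) auto
    hence "\<bar>L1\<bar>+1 \<le> S1 * (2 * ln R)" using assms by (simp add: field_simps)
    thus "1 \<le> S1 * ln (R^2) + L1" by (subst lnR2) linarith
    have "(\<bar>L2\<bar>+1)/(2*S2) \<le> ln R" using e1(2) R1 by (subst ln_ge_iff) auto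
    hence "\<bar>L2\<bar>+1 \<le> S2 * (2 * ln R)" using assms by (simp add: field_simps)
    thus "1 \<le> S2 * ln (R^2) + L2" by (subst lnR2) linarith
  qed
  define K where "K = cbox (\<delta>, \<delta>) (R, R)"
  define cl where "cl = (\<lambda>z::real. max \<delta> (min R z))"
  define f1 where "f1 = (\<lambda>r t. phi p a b A B G H1 S1 L1 r t)"
  define f2 where "f2 = (\<lambda>r t. phi p a b B A G H2 S2 L2 t r)"
  define T where "T = (\<lambda>z::real\<times>real. (cl (fst z + f1 (fst z) (snd z)), cl (snd z + f2 (fst z) (snd z))))"
  have dR: "\<delta> \<le> R" using d0 R1 by simp
  have Kmem: "z \<in> K \<longleftrightarrow> \<delta> \<le> fst z \<and> fst z \<le> R \<and> \<delta> \<le> snd z \<and> snd z \<le> R" for z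
    by (cases z) (auto simp: K_def cbox_Pair_iff)
  have cont: "continuous_on K T"
  proof -
    have sub1: "K \<subseteq> {z. fst z > 0}" and sub2: "K \<subseteq> {z. snd z > 0}" using Kmem d0 by force+
    have c1: "continuous_on K (\<lambda>z. f1 (fst z) (snd z))"
      unfolding f1_def by (rule continuous_on_subset[OF phi_cont1 sub1])
    have c2: "continuous_on K (\<lambda>z. f2 (fst z) (snd z))"
      unfolding f2_def by (rule continuous_on_subset[OF phi_cont2 sub2])
    have c3: "continuous_on K (\<lambda>z. fst z + f1 (fst z) (snd z))"
      by (intro continuous_on_add continuous_on_fst continuous_on_id c1)
    have c4: "continuous_on K (\<lambda>z. snd z + f2 (fst z) (snd z))"
      by (intro continuous_on_add continuous_on_snd continuous_on_id c2)
    show ?thesis unfolding T_def cl_def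
      by (intro continuous_on_Pair clamp_cont c3 c4)
  qed
  have clm: "\<delta> \<le> cl z \<and> cl z \<le> R" for z
    unfolding cl_def using dR by (auto simp: max_def min_def)
  have map: "T \<in> K \<rightarrow> K"
  proof (rule Pi_I)
    fix z assume "z \<in> K"
    show "T z \<in> K" unfolding Kmem T_def using clm by simp
  qed
  obtain z where zK: "z \<in> K" and fz: "T z = z"
  proof -
    have "K \<noteq> {}" using dR Kmem by force
    moreover have "compact K" "convex K" by (auto simp: K_def)
    ultimately show ?thesis using brouwer[of K T] cont map that by blast
  qed
  obtain r t where z: "z = (r, t)" by (cases z)
  have rt: "\<delta> \<le> r" "r \<le> R" "\<delta> \<le> t" "t \<le> R" using zK z Kmem by auto
  have lo1: "f1 \<delta> t > 0" unfolding f1_def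
    by (rule phi_low) (use assms d0 dL1 rt in auto)
  have lo2: "f2 r \<delta> > 0" unfolding f2_def
    by (rule phi_low) (use assms d0 dL2 rt in auto)
  have hi1: "f1 R t < 0" unfolding f1_def
    by (rule phi_high) (use assms R1 Rc1 lnR rt d0 c1_def in auto)
  have hi2: "f2 r R < 0" unfolding f2_def
    by (rule phi_high) (use assms R1 Rc1 lnR rt d0 c2_def in auto)
  have fx1: "cl (r + f1 r t) = r" and fx2: "cl (t + f2 r t) = t" using fz z by (auto simp: T_def)
  have "f1 r t = 0"
  proof (rule ccontr)
    assume ne: "f1 r t \<noteq> 0"
    show False
    proof (cases "f1 r t > 0")
      case True
      hence "r = R" using fx1 rt unfolding cl_def max_def min_def by (auto split: if_splits)
      thus False using hi1 True by simp
    next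
      case False
      hence "f1 r t < 0" using ne by simp
      hence "r = \<delta>" using fx1 rt unfolding cl_def max_def min_def by (auto split: if_splits)
      thus False using lo1 \<open>f1 r t < 0\<close> by simp
    qed
  qed
  moreover have "f2 r t = 0"
  proof (rule ccontr)
    assume ne: "f2 r t \<noteq> 0"
    show False
    proof (cases "f2 r t > 0")
      case True
      hence "t = R" using fx2 rt unfolding cl_def max_def min_def by (auto split: if_splits)
      thus False using hi2 True by simp
    next
      case False
      hence "f2 r t < 0" using ne by simp
      hence "t = \<delta>" using fx2 rt unfolding cl_def max_def min_def by (auto split: if_splits)
      thus False using lo2 \<open>f2 r t < 0\<close> by simp
    qed
  qed
  ultimately show ?thesis using rt d0 unfolding f1_def f2_def
    by (intro exI[of _ r] exI[of _ t]) auto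
qed

lemma exuniq_sol:
  assumes "0 \<le> A" "0 \<le> B" "0 \<le> G" "0 < a" "0 < b" "0 < H1" "0 < H2" "S1 > 0" "S2 > 0" "p \<ge> 5"
  shows "\<exists>!(r,t). 0 < r \<and> 0 < t \<and> phi p a b A B G H1 S1 L1 r t = 0 \<and> phi p a b B A G H2 S2 L2 t r = 0"
proof -
  obtain r t where rt: "0 < r" "0 < t" "phi p a b A B G H1 S1 L1 r t = 0" "phi p a b B A G H2 S2 L2 t r = 0"
    using exist_sol[OF assms] by blast
  show ?thesis
  proof (rule ex1I[of _ "(r,t)"])
    show "case (r, t) of (r, t) \<Rightarrow> 0 < r \<and> 0 < t \<and> phi p a b A B G H1 S1 L1 r t = 0 \<and> phi p a b B A G H2 S2 L2 t r = 0"
      using rt by simp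
  next
    fix z assume "case z of (r, t) \<Rightarrow> 0 < r \<and> 0 < t \<and> phi p a b A B G H1 S1 L1 r t = 0 \<and> phi p a b B A G H2 S2 L2 t r = 0"
    then obtain r2 t2 where z: "z = (r2,t2)" and s: "0 < r2" "0 < t2" "phi p a b A B G H1 S1 L1 r2 t2 = 0" "phi p a b B A G H2 S2 L2 t2 r2 = 0"
      by (cases z) auto
    show "z = (r, t)"
    proof (cases "r2 * t \<le> r * t2")
      case True
      from uniq_half[OF assms(1-9) _ rt(1,2) s(1,2) rt(3,4) s(3,4) True] assms z show ?thesis by auto
    next
      case False
      hence "t2 * r \<le> t * r2" by (simp add: mult.commute)
      from uniq_half[OF assms(2,1,3-5,7,6,9,8) _ rt(2,1) s(2,1) rt(4,3) s(4,3) this] assms z show ?thesis by auto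
    qed
  qed
qed

lemma sum1d:
  assumes "\<beta> > 1"
  shows "(\<lambda>k::int. (1 + real_of_int \<bar>k\<bar>) powr (-\<beta>)) summable_on UNIV"
proof -
  let ?g = "\<lambda>k::int. (1 + real_of_int \<bar>k\<bar>) powr (-\<beta>)"
  have "summable (\<lambda>n::nat. real n powr (-\<beta>))" using assms by (subst summable_real_powr_iff) auto
  hence "summable (\<lambda>n::nat. real (Suc n) powr (-\<beta>))"
    using summable_Suc_iff[of "\<lambda>n. real n powr (-\<beta>)"] by simp
  hence s: "(\<lambda>n::nat. (1 + real n) powr (-\<beta>)) summable_on UNIV"
    by (subst summable_on_UNIV_nonneg_real_iff) (auto simp: add.commute)
  have 1: "?g summable_on range int"
    by (subst summable_on_reindex) (auto simp: o_def inj_on_def s)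
  have 2: "?g summable_on range (\<lambda>n::nat. - int n)"
    by (subst summable_on_reindex) (auto simp: o_def inj_on_def s)
  have "range int \<union> range (\<lambda>n::nat. - int n) = UNIV"
  proof (intro set_eqI iffI)
    fix k :: int
    show "k \<in> range int \<union> range (\<lambda>n::nat. - int n)"
    proof (cases "k \<ge> 0")
      case True thus ?thesis by (auto intro!: image_eqI[of _ _ "nat k"])
    next
      case False thus ?thesis by (auto intro!: image_eqI[of _ _ "nat (-k)"])
    qed
  qed auto
  thus ?thesis using summable_on_union[OF 1 2] by simp
qed

lemma prod_summable:
  assumes "\<beta> > 1"
  shows "(\<lambda>z::int^'d::finite. \<Prod>i\<in>UNIV. (1 + real_of_int \<bar>z$i\<bar>) powr (-\<beta>)) summable_on UNIV"
proof -
  let ?g = "\<lambda>k::int. (1 + real_of_int \<bar>k\<bar>) powr (-\<beta>)"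
  have ga: "Infinite_Sum.abs_summable_on ?g UNIV" using sum1d[OF assms] by simp
  have ga': "Infinite_Set_Sum.abs_summable_on ?g UNIV" using ga by (rule abs_summable_equivalent[THEN iffD1])
  have "Infinite_Set_Sum.abs_summable_on (\<lambda>h. \<Prod>i\<in>(UNIV::'d set). ?g (h i)) (PiE UNIV (\<lambda>_. UNIV))"
    using ga' by (intro abs_summable_on_prod_PiE) auto
  hence "Infinite_Set_Sum.abs_summable_on (\<lambda>h. \<Prod>i\<in>(UNIV::'d set). ?g (h i)) UNIV"
    by simp
  hence "Infinite_Sum.abs_summable_on (\<lambda>h. \<Prod>i\<in>(UNIV::'d set). ?g (h i)) UNIV"
    by (rule abs_summable_equivalent[THEN iffD2])
  hence "(\<lambda>h. \<Prod>i\<in>(UNIV::'d set). ?g (h i)) summable_on UNIV"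
    by (rule abs_summable_summable)
  moreover have "bij_betw vec_nth (UNIV::(int^'d) set) (UNIV :: ('d \<Rightarrow> int) set)"
    by (metis bij_betwI' vec_lambda_inverse vec_nth_inject UNIV_I vec_lambda_cases)
  ultimately show ?thesis
    using summable_on_reindex_bij_betw[of vec_nth UNIV UNIV "\<lambda>h. \<Prod>i\<in>(UNIV::'d set). ?g (h i)"] by simp
qed

lemma norm1_bound:
  fixes z :: "int^'d::finite"
  assumes "z \<noteq> 0" "\<alpha> > 0"
  shows "(\<Sum>i\<in>UNIV. real_of_int \<bar>z$i\<bar>) powr (-\<alpha>)
     \<le> 2 powr \<alpha> * (\<Prod>i\<in>UNIV. (1 + real_of_int \<bar>z$i\<bar>) powr (-(\<alpha> / real CARD('d))))"
proof -
  define n where "n = (\<Sum>i\<in>UNIV. real_of_int \<bar>z$i\<bar>)"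
  define \<beta> where "\<beta> = \<alpha> / real CARD('d)"
  obtain j where j: "z$j \<noteq> 0" using assms by (metis vec_eq_iff zero_index)
  have compl: "real_of_int \<bar>z$i\<bar> \<le> n" for i
    unfolding n_def by (rule member_le_sum) auto
  have "1 \<le> real_of_int \<bar>z$j\<bar>" using j by simp
  hence n1: "1 \<le> n" using compl[of j] by simp
  have each: "(2*n) powr (-\<beta>) \<le> (1 + real_of_int \<bar>z$i\<bar>) powr (-\<beta>)" for i
  proof (rule powr_mono2')
    show "-\<beta> \<le> 0" using assms by (simp add: \<beta>_def)
    show "0 < 1 + real_of_int \<bar>z$i\<bar>" by (smt (verit) of_int_nonneg abs_ge_zero)
    show "1 + real_of_int \<bar>z$i\<bar> \<le> 2*n" using compl[of i] n1 by simp
  qed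
  have "(\<Prod>i\<in>(UNIV::'d set). (2*n) powr (-\<beta>)) \<le> (\<Prod>i\<in>UNIV. (1 + real_of_int \<bar>z$i\<bar>) powr (-\<beta>))"
    by (intro prod_mono) (use each in auto)
  also have "(\<Prod>i\<in>(UNIV::'d set). (2*n) powr (-\<beta>)) = ((2*n) powr (-\<beta>)) ^ CARD('d)" by simp
  also have "\<dots> = (2*n) powr (real CARD('d) * (-\<beta>))" using n1 by (subst powr_power) auto
  also have "real CARD('d) * (-\<beta>) = -\<alpha>" by (simp add: \<beta>_def)
  finally have A: "(2*n) powr (-\<alpha>) \<le> (\<Prod>i\<in>UNIV. (1 + real_of_int \<bar>z$i\<bar>) powr (-\<beta>))" .
  have "(2*n) powr (-\<alpha>) = 2 powr (-\<alpha>) * n powr (-\<alpha>)" using n1 by (simp add: powr_mult)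
  hence "n powr (-\<alpha>) = 2 powr \<alpha> * (2*n) powr (-\<alpha>)" by (simp add: powr_minus field_simps)
  also have "\<dots> \<le> 2 powr \<alpha> * (\<Prod>i\<in>UNIV. (1 + real_of_int \<bar>z$i\<bar>) powr (-\<beta>))"
    using A by (intro mult_left_mono) auto
  finally show ?thesis by (simp add: n_def \<beta>_def)
qed

lemma wsum:
  fixes w :: "'d::finite lat \<Rightarrow> 'd lat \<Rightarrow> real"
  assumes "admissible_weight s w" "0 < s"
  shows "\<exists>W0. \<forall>x. (w x) summable_on (UNIV - {x}) \<and> infsum (w x) (UNIV - {x}) \<le> W0"
proof -
  define \<alpha> where "\<alpha> = real CARD('d) + 2 * s"
  define \<beta> where "\<beta> = \<alpha> / real CARD('d)"
  obtain c C where cC: "0 < c" "c \<le> C" and bd: "\<And>x y. x \<noteq> y \<Longrightarrow>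
            c * ldist x y powr (- (real CARD('d) + 2 * s)) \<le> w x y \<and>
            w x y \<le> C * ldist x y powr (- (real CARD('d) + 2 * s))"
    using assms(1) unfolding admissible_weight_def by metis
  have wpos: "\<And>x y. x \<noteq> y \<Longrightarrow> 0 < w x y" using assms(1) unfolding admissible_weight_def by blast
  have a0: "\<alpha> > 0" using assms by (simp add: \<alpha>_def add_pos_pos)
  have cd0: "real CARD('d) > 0" by simp
  have "real CARD('d) < \<alpha>" using assms by (simp add: \<alpha>_def)
  hence b1: "\<beta> > 1" using cd0 unfolding \<beta>_def by (simp add: less_divide_eq_1)
  define P where "P = (\<lambda>z::int^'d. \<Prod>i\<in>UNIV. (1 + real_of_int \<bar>z$i\<bar>) powr (-\<beta>))"
  have Ps: "P summable_on UNIV" unfolding P_def by (rule prod_summable[OF b1])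
  have Pnn: "0 \<le> P z" for z unfolding P_def by (intro prod_nonneg) auto
  define W0 where "W0 = C * 2 powr \<alpha> * infsum P UNIV"
  have main: "(w x) summable_on (UNIV - {x}) \<and> infsum (w x) (UNIV - {x}) \<le> W0" for x
  proof -
    have bij: "bij_betw (\<lambda>z. x + z) (UNIV - {0}) (UNIV - {x})"
      by (rule bij_betwI[of _ _ _ "\<lambda>y. y - x"]) auto
    have bnd: "w x (x+z) \<le> (C * 2 powr \<alpha>) * P z" if "z \<in> UNIV - {0}" for z
    proof -
      have ne: "x \<noteq> x + z" using that by simp
      have ld: "ldist x (x+z) = (\<Sum>i\<in>UNIV. real_of_int \<bar>z$i\<bar>)" unfolding ldist_def by simp
      have "w x (x+z) \<le> C * (\<Sum>i\<in>UNIV. real_of_int \<bar>z$i\<bar>) powr (-\<alpha>)"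
        using bd[OF ne] ld by (simp add: \<alpha>_def)
      also have "\<dots> \<le> C * (2 powr \<alpha> * P z)"
        using norm1_bound[of z \<alpha>] that a0 cC unfolding P_def \<beta>_def by (intro mult_left_mono) simp_all
      finally show ?thesis by simp
    qed
    have "P summable_on (UNIV - {0})" by (rule summable_on_subset_banach[OF Ps]) simp
    hence Ps': "(\<lambda>z. (C * 2 powr \<alpha>) * P z) summable_on (UNIV - {0})"
      by (rule summable_on_cmult_right)
    have s1: "(\<lambda>z. w x (x+z)) summable_on (UNIV - {0})"
      by (rule summable_on_comparison_test[OF Ps' bnd]) (use wpos in \<open>auto simp: less_imp_le\<close>)
    have "infsum (\<lambda>z. w x (x+z)) (UNIV - {0}) \<le> infsum (\<lambda>z. (C * 2 powr \<alpha>) * P z) (UNIV - {0})"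
      by (rule infsum_mono[OF s1 Ps' bnd])
    also have "\<dots> = (C * 2 powr \<alpha>) * infsum P (UNIV - {0})" by (rule infsum_cmult_right') 
    also have "infsum P (UNIV - {0}) \<le> infsum P UNIV"
      by (rule infsum_mono_neutral[OF \<open>P summable_on (UNIV - {0})\<close> Ps]) (use Pnn in auto)
    hence "(C * 2 powr \<alpha>) * infsum P (UNIV - {0}) \<le> W0" using cC unfolding W0_def
      by (intro mult_left_mono) auto
    finally have "infsum (\<lambda>z. w x (x+z)) (UNIV - {0}) \<le> W0" .
    thus ?thesis using s1 summable_on_reindex_bij_betw[OF bij, of "w x"] infsum_reindex_bij_betw[OF bij, of "w x"]
      by simp
  qed
  thus ?thesis by blast
qed

lemma enn_summable:
  fixes f :: "'a \<Rightarrow> real"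
  assumes nn: "\<And>x. x\<in>A \<Longrightarrow> 0 \<le> f x" and fin: "(\<Sum>\<^sub>\<infinity>x\<in>A. ennreal (f x)) \<noteq> \<infinity>"
  shows "f summable_on A"
proof (rule nonneg_bdd_above_summable_on)
  show "\<And>x. x\<in>A \<Longrightarrow> 0 \<le> f x" by fact
  obtain r where r: "(\<Sum>\<^sub>\<infinity>x\<in>A. ennreal (f x)) = ennreal r" "0 \<le> r"
    using fin by (cases "(\<Sum>\<^sub>\<infinity>x\<in>A. ennreal (f x))") auto
  show "bdd_above (sum f ` {F. F \<subseteq> A \<and> finite F})"
  proof (rule bdd_aboveI2)
    fix F assume F: "F \<in> {F. F \<subseteq> A \<and> finite F}"
    have "ennreal (sum f F) = (\<Sum>x\<in>F. ennreal (f x))"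
      using F nn by (subst sum_ennreal) auto
    also have "\<dots> = (\<Sum>\<^sub>\<infinity>x\<in>F. ennreal (f x))" using F by simp
    also have "\<dots> \<le> (\<Sum>\<^sub>\<infinity>x\<in>A. ennreal (f x))"
      using F by (intro infsum_mono_neutral) (auto intro: nonneg_summable_on_complete)
    finally show "sum f F \<le> r" using r by (simp add: ennreal_le_iff)
  qed
qed

lemma enn_infsum:
  fixes f :: "'a \<Rightarrow> real"
  assumes nn: "\<And>x. x\<in>A \<Longrightarrow> 0 \<le> f x" and s: "f summable_on A"
  shows "(\<Sum>\<^sub>\<infinity>x\<in>A. ennreal (f x)) = ennreal (infsum f A)"
proof -
  have "(\<Sum>\<^sub>\<infinity>x\<in>A. ennreal (f x)) = (SUP F\<in>{F. finite F \<and> F \<subseteq> A}. (\<Sum>x\<in>F. ennreal (f x)))"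
    by (rule nonneg_infsum_complete) auto
  also have "\<dots> = (SUP F\<in>{F. finite F \<and> F \<subseteq> A}. ennreal (sum f F))"
    using nn by (intro SUP_cong refl) (auto intro!: sum_ennreal)
  also have "\<dots> = ennreal (infsum f A)"
    using infsum_nonneg_is_SUPREMUM_ennreal[OF s nn] by simp
  finally show ?thesis .
qed

lemma le_infsum_single:
  fixes f :: "'a \<Rightarrow> real"
  assumes nn: "\<And>x. x\<in>A \<Longrightarrow> 0 \<le> f x" and s: "f summable_on A" and y: "y \<in> A"
  shows "f y \<le> infsum f A"
proof -
  have "infsum f {y} \<le> infsum f A"
    by (rule infsum_mono_neutral) (use nn s y in auto)
  thus ?thesis by simp
qed

lemma summable_bound:
  fixes f g :: "'a \<Rightarrow> real"
  assumes "g summable_on A" "\<And>x. x \<in> A \<Longrightarrow> \<bar>f x\<bar> \<le> g x"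
  shows "f summable_on A"
proof -
  have "(\<lambda>x. norm (f x)) summable_on A"
    by (rule Infinite_Sum.abs_summable_on_comparison_test'[OF assms(1)]) (use assms(2) in auto)
  thus ?thesis by (rule abs_summable_summable)
qed

lemma core:
  fixes w :: "'a \<Rightarrow> 'a \<Rightarrow> real" and g :: "'a \<Rightarrow> real"
  assumes wsym: "\<And>x y. x \<noteq> y \<Longrightarrow> w x y = w y x" and wpos: "\<And>x y. x \<noteq> y \<Longrightarrow> 0 \<le> w x y"
    and wS: "\<And>x. (w x) summable_on (UNIV - {x})" and wB: "\<And>x. infsum (w x) (UNIV - {x}) \<le> W0"
    and gS: "(\<lambda>x. (g x)^2) summable_on UNIV"
  shows "\<And>x. (\<lambda>y. w x y * (g x - g y)^2) summable_on (UNIV - {x})"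
    and "(\<lambda>x. infsum (\<lambda>y. w x y * (g x - g y)^2) (UNIV - {x})) summable_on UNIV"
    and "infsum (\<lambda>x. infsum (\<lambda>y. w x y * (g x - g y)^2) (UNIV - {x})) UNIV
          \<le> 4 * W0 * infsum (\<lambda>x. (g x)^2) UNIV"
proof -
  define S where "S = infsum (\<lambda>x. (g x)^2) UNIV"
  have gle: "(g y)^2 \<le> S" for y unfolding S_def by (rule le_infsum_single[OF _ gS]) auto
  define W where "W x = infsum (w x) (UNIV - {x})" for x
  have Wnn: "0 \<le> W x" for x unfolding W_def by (rule infsum_nonneg) (use wpos in auto)
  have W0nn: "0 \<le> W0" using Wnn[of undefined] wB[of undefined] by (simp add: W_def)
  have WW0: "W x \<le> W0" for x using wB by (simp add: W_def)
  have t1: "(\<lambda>y. w x y * (g y)^2) summable_on (UNIV - {x})" for x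
  proof (rule summable_bound)
    show "(\<lambda>y. S * w x y) summable_on (UNIV - {x})" by (rule summable_on_cmult_right[OF wS])
    fix y assume "y \<in> UNIV - {x}"
    hence "0 \<le> w x y" using wpos by auto
    hence "w x y * (g y)^2 \<le> w x y * S" using gle[of y] by (intro mult_left_mono) auto
    thus "\<bar>w x y * (g y)^2\<bar> \<le> S * w x y" using \<open>0 \<le> w x y\<close> by (simp add: mult.commute)
  qed
  have t2: "(\<lambda>y. w x y * (g x)^2) summable_on (UNIV - {x})" for x
    by (rule summable_on_cmult_left[OF wS])
  define T where "T x = infsum (\<lambda>y. w x y * (g y)^2) (UNIV - {x})" for x
  have Tnn: "0 \<le> T x" for x unfolding T_def by (rule infsum_nonneg) (use wpos in auto)
  define D where "D = Sigma UNIV (\<lambda>x::'a. UNIV - {x})"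
  have hs: "((\<lambda>x. w x y * (g y)^2) has_sum ((g y)^2 * W y)) (UNIV - {y})" for y
  proof -
    have "((\<lambda>x. (g y)^2 * w y x) has_sum ((g y)^2 * W y)) (UNIV - {y})"
      unfolding W_def by (rule has_sum_cmult_right) (rule has_sum_infsum[OF wS])
    moreover have "\<And>x. x \<in> UNIV - {y} \<Longrightarrow> w x y * (g y)^2 = (g y)^2 * w y x"
      using wsym by auto
    ultimately show ?thesis using has_sum_cong by (metis (no_types, lifting))
  qed
  have os: "(\<lambda>y. (g y)^2 * W y) summable_on UNIV"
  proof (rule summable_bound)
    show "(\<lambda>y. (g y)^2 * W0) summable_on UNIV" by (rule summable_on_cmult_left[OF gS])
    fix y show "\<bar>(g y)^2 * W y\<bar> \<le> (g y)^2 * W0" using Wnn[of y] WW0[of y] by (simp add: mult_left_mono)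
  qed
  have SF: "(\<lambda>(y,x). w x y * (g y)^2) summable_on D"
    unfolding D_def
    by (rule summable_on_SigmaI[where g = "\<lambda>y. (g y)^2 * W y"]) (use hs os wpos in auto)
  have swD: "prod.swap ` D = D" by (auto simp: D_def image_iff)
  have ext: "(\<lambda>(x,y). w x y * (g y)^2) \<circ> prod.swap = (\<lambda>(y,x). w x y * (g y)^2)"
    by (auto simp: fun_eq_iff)
  have SF2: "(\<lambda>(x,y). w x y * (g y)^2) summable_on D"
  proof -
    have "((\<lambda>(x,y). w x y * (g y)^2) \<circ> prod.swap) summable_on D" using SF ext by simp
    hence "(\<lambda>(x,y). w x y * (g y)^2) summable_on (prod.swap ` D)"
      by (subst summable_on_reindex) auto
    thus ?thesis using swD by simp
  qed
  have Ts: "T summable_on UNIV"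
    using summable_on_Sigma_banach[of "\<lambda>x y. w x y * (g y)^2" UNIV "\<lambda>x. UNIV - {x}"] SF2
    unfolding D_def T_def by simp
  have Tsum: "infsum T UNIV = infsum (\<lambda>y. (g y)^2 * W y) UNIV"
  proof -
    have "infsum T UNIV = infsum (\<lambda>(x,y). w x y * (g y)^2) D"
      using infsum_Sigma'_banach[of "\<lambda>x y. w x y * (g y)^2" UNIV "\<lambda>x. UNIV - {x}"] SF2
      unfolding D_def T_def by simp
    also have "\<dots> = infsum (\<lambda>(x,y). w x y * (g y)^2) (prod.swap ` D)" using swD by simp
    also have "\<dots> = infsum ((\<lambda>(x,y). w x y * (g y)^2) \<circ> prod.swap) D"
      by (subst infsum_reindex) auto
    also have "\<dots> = infsum (\<lambda>(y,x). w x y * (g y)^2) D" using ext by simp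
    also have "\<dots> = infsum (\<lambda>y. infsum (\<lambda>x. w x y * (g y)^2) (UNIV - {y})) UNIV"
      using infsum_Sigma'_banach[of "\<lambda>y x. w x y * (g y)^2" UNIV "\<lambda>y. UNIV - {y}"] SF
      unfolding D_def by simp
    also have "\<dots> = infsum (\<lambda>y. (g y)^2 * W y) UNIV"
      using hs by (intro infsum_cong) (simp add: infsumI)
    finally show ?thesis .
  qed
  have TS: "infsum T UNIV \<le> W0 * S"
  proof -
    have "infsum (\<lambda>y. (g y)^2 * W y) UNIV \<le> infsum (\<lambda>y. (g y)^2 * W0) UNIV"
      by (rule infsum_mono[OF os summable_on_cmult_left[OF gS]]) (simp add: WW0 mult_left_mono)
    also have "\<dots> = W0 * S" unfolding S_def infsum_cmult_left' by (rule mult.commute)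
    finally show ?thesis using Tsum by simp
  qed
  have b: "w x y * (g x - g y)^2 \<le> 2 * (w x y * (g x)^2) + 2 * (w x y * (g y)^2)" if "x \<noteq> y" for x y
  proof -
    have "2*(g x)^2 + 2*(g y)^2 - (g x - g y)^2 = (g x + g y)^2" by (simp add: power2_eq_square algebra_simps)
    hence "(g x - g y)^2 \<le> 2 * (g x)^2 + 2 * (g y)^2" using zero_le_power2[of "g x + g y"] by linarith
    hence "w x y * (g x - g y)^2 \<le> w x y * (2 * (g x)^2 + 2 * (g y)^2)"
      using wpos[OF that] by (intro mult_left_mono) auto
    thus ?thesis by (simp add: algebra_simps)
  qed
  have bs: "(\<lambda>y. 2 * (w x y * (g x)^2) + 2 * (w x y * (g y)^2)) summable_on (UNIV - {x})" for x
    by (intro summable_on_add summable_on_cmult_right t1 t2)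
  show s1: "(\<lambda>y. w x y * (g x - g y)^2) summable_on (UNIV - {x})" for x
    by (rule summable_bound[OF bs]) (use b wpos in auto)
  have inner: "infsum (\<lambda>y. w x y * (g x - g y)^2) (UNIV - {x}) \<le> 2 * ((g x)^2 * W x) + 2 * T x" for x
  proof -
    have "infsum (\<lambda>y. w x y * (g x - g y)^2) (UNIV - {x})
       \<le> infsum (\<lambda>y. 2 * (w x y * (g x)^2) + 2 * (w x y * (g y)^2)) (UNIV - {x})"
      by (rule infsum_mono[OF s1 bs]) (use b in auto)
    also have "\<dots> = 2 * infsum (\<lambda>y. w x y * (g x)^2) (UNIV - {x}) + 2 * T x"
      unfolding T_def
      by (subst infsum_add[OF summable_on_cmult_right[OF t2] summable_on_cmult_right[OF t1]])
         (simp add: infsum_cmult_right')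
    also have "infsum (\<lambda>y. w x y * (g x)^2) (UNIV - {x}) = (g x)^2 * W x"
      unfolding W_def by (simp add: infsum_cmult_left wS mult.commute)
    finally show ?thesis .
  qed
  have innn: "0 \<le> infsum (\<lambda>y. w x y * (g x - g y)^2) (UNIV - {x})" for x
    by (rule infsum_nonneg) (use wpos in auto)
  have ob: "(\<lambda>x. 2 * ((g x)^2 * W0) + 2 * T x) summable_on UNIV"
    by (intro summable_on_add summable_on_cmult_right summable_on_cmult_left gS Ts)
  have ib: "infsum (\<lambda>y. w x y * (g x - g y)^2) (UNIV - {x}) \<le> 2 * ((g x)^2 * W0) + 2 * T x" for x
  proof -
    have "(g x)^2 * W x \<le> (g x)^2 * W0" using WW0[of x] by (simp add: mult_left_mono)
    thus ?thesis using inner[of x] by simp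
  qed
  show s2: "(\<lambda>x. infsum (\<lambda>y. w x y * (g x - g y)^2) (UNIV - {x})) summable_on UNIV"
    by (rule summable_bound[OF ob]) (use ib innn in auto)
  have "infsum (\<lambda>x. infsum (\<lambda>y. w x y * (g x - g y)^2) (UNIV - {x})) UNIV
      \<le> infsum (\<lambda>x. 2 * ((g x)^2 * W0) + 2 * T x) UNIV"
    by (rule infsum_mono[OF s2 ob]) (use ib in auto)
  also have "\<dots> = 2 * (W0 * S) + 2 * infsum T UNIV"
    by (subst infsum_add[OF summable_on_cmult_right[OF summable_on_cmult_left[OF gS]] summable_on_cmult_right[OF Ts]])
       (simp add: infsum_cmult_right' infsum_cmult_left' S_def mult.commute)
  also have "\<dots> \<le> 2 * (W0 * S) + 2 * (W0 * S)" using TS by (simp add: mult.commute)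
  finally show "infsum (\<lambda>x. infsum (\<lambda>y. w x y * (g x - g y)^2) (UNIV - {x})) UNIV
          \<le> 4 * W0 * infsum (\<lambda>x. (g x)^2) UNIV" by (simp add: S_def)
qed

definition wok :: "('a \<Rightarrow> 'a \<Rightarrow> real) \<Rightarrow> real \<Rightarrow> bool" where
  "wok w W0 \<longleftrightarrow> (\<forall>x y. x \<noteq> y \<longrightarrow> w x y = w y x \<and> 0 < w x y) \<and>
     (\<forall>x. (w x) summable_on (UNIV - {x}) \<and> infsum (w x) (UNIV - {x}) \<le> W0)"

lemma wok_core:
  assumes "wok w W0" "(\<lambda>x. (g x)^2) summable_on UNIV"
  shows "\<And>x. (\<lambda>y. w x y * (g x - g y)^2) summable_on (UNIV - {x})"
    and "(\<lambda>x. infsum (\<lambda>y. w x y * (g x - g y)^2) (UNIV - {x})) summable_on UNIV"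
    and "infsum (\<lambda>x. infsum (\<lambda>y. w x y * (g x - g y)^2) (UNIV - {x})) UNIV
          \<le> 4 * W0 * infsum (\<lambda>x. (g x)^2) UNIV"
proof -
  have a: "\<And>x y. x \<noteq> y \<Longrightarrow> w x y = w y x" using assms(1) unfolding wok_def by blast
  have b: "\<And>x y. x \<noteq> y \<Longrightarrow> 0 \<le> w x y" using assms(1) unfolding wok_def by (meson less_imp_le)
  have c: "\<And>x. (w x) summable_on (UNIV - {x})" using assms(1) unfolding wok_def by blast
  have d: "\<And>x. infsum (w x) (UNIV - {x}) \<le> W0" using assms(1) unfolding wok_def by blast
  note r = core[of w W0 g, OF a b c d assms(2)]
  show "\<And>x. (\<lambda>y. w x y * (g x - g y)^2) summable_on (UNIV - {x})" by (rule r(1))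
  show "(\<lambda>x. infsum (\<lambda>y. w x y * (g x - g y)^2) (UNIV - {x})) summable_on UNIV" by (rule r(2))
  show "infsum (\<lambda>x. infsum (\<lambda>y. w x y * (g x - g y)^2) (UNIV - {x})) UNIV
          \<le> 4 * W0 * infsum (\<lambda>x. (g x)^2) UNIV" by (rule r(3))
qed

lemma wok_W0:
  fixes w :: "'a \<Rightarrow> 'a \<Rightarrow> real"
  shows "wok w W0 \<Longrightarrow> 0 \<le> W0"
proof -
  assume a: "wok w W0"
  have "0 \<le> infsum (w undefined) (UNIV - {undefined})"
  proof (rule infsum_nonneg)
    fix x :: 'a assume "x \<in> UNIV - {undefined}"
    hence "undefined \<noteq> x" by auto
    thus "0 \<le> w undefined x" using a unfolding wok_def by (meson less_imp_le)
  qed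
  moreover have "infsum (w undefined) (UNIV - {undefined}) \<le> W0" using a unfolding wok_def by blast
  ultimately show ?thesis by linarith
qed

lemma Wnorm_bound:
  fixes w :: "'d::finite lat \<Rightarrow> 'd lat \<Rightarrow> real" and g :: "'d lat \<Rightarrow> real"
  assumes w: "wok w W0" and gS: "(\<lambda>x. (g x)^2) summable_on UNIV"
  shows "W_norm_sq w g \<le> ennreal ((4*W0+1) * infsum (\<lambda>x. (g x)^2) UNIV)"
proof -
  define Dg where "Dg x = infsum (\<lambda>y. w x y * (g x - g y)^2) (UNIV - {x})" for x
  have wnn: "\<And>x y. x \<noteq> y \<Longrightarrow> 0 \<le> w x y" using w unfolding wok_def by (meson less_imp_le)
  note c = wok_core[OF w gS]
  have Dnn: "0 \<le> Dg x" for x unfolding Dg_def by (rule infsum_nonneg) (use wnn in auto)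
  have gs: "grad_sq w g x = ennreal (Dg x / 2)" for x
  proof -
    have eq: "(\<lambda>y. w x y * (g x - g y)^2 / 2) = (\<lambda>y. w x y * (g x - g y)^2 * (1/2))" by auto
    have s: "(\<lambda>y. w x y * (g x - g y)^2 / 2) summable_on (UNIV - {x})"
      unfolding eq by (rule summable_on_cmult_left[OF c(1)])
    have "grad_sq w g x = ennreal (infsum (\<lambda>y. w x y * (g x - g y)^2 / 2) (UNIV - {x}))"
      unfolding grad_sq_def by (rule enn_infsum[OF _ s]) (use wnn in auto)
    also have "infsum (\<lambda>y. w x y * (g x - g y)^2 / 2) (UNIV - {x}) = Dg x / 2"
      unfolding eq Dg_def infsum_cmult_left' by simp
    finally show ?thesis .
  qed
  have s2: "(\<lambda>x. Dg x / 2 + (g x)^2) summable_on UNIV"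
  proof -
    have eq: "(\<lambda>x. Dg x / 2) = (\<lambda>x. Dg x * (1/2))" by auto
    have "(\<lambda>x. Dg x / 2) summable_on UNIV" unfolding eq unfolding Dg_def by (rule summable_on_cmult_left[OF c(2)])
    thus ?thesis by (rule summable_on_add[OF _ gS])
  qed
  have e1: "W_norm_sq w g = (\<Sum>\<^sub>\<infinity>x\<in>UNIV. ennreal (Dg x / 2 + (g x)^2))"
    unfolding W_norm_sq_def gs
  proof (rule infsum_cong)
    fix x
    show "ennreal (Dg x / 2) + ennreal ((g x)^2) = ennreal (Dg x / 2 + (g x)^2)"
      by (rule ennreal_plus[symmetric]) (use Dnn[of x] in auto)
  qed
  have e2: "(\<Sum>\<^sub>\<infinity>x\<in>UNIV. ennreal (Dg x / 2 + (g x)^2)) = ennreal (infsum (\<lambda>x. Dg x / 2 + (g x)^2) UNIV)"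
    by (rule enn_infsum[OF _ s2]) (use Dnn in auto)
  have e3: "infsum (\<lambda>x. Dg x / 2 + (g x)^2) UNIV = infsum Dg UNIV / 2 + infsum (\<lambda>x. (g x)^2) UNIV"
  proof -
    have eq: "(\<lambda>x. Dg x / 2) = (\<lambda>x. Dg x * (1/2))" by auto
    have "(\<lambda>x. Dg x / 2) summable_on UNIV" unfolding eq unfolding Dg_def by (rule summable_on_cmult_left[OF c(2)])
    hence "infsum (\<lambda>x. Dg x / 2 + (g x)^2) UNIV = infsum (\<lambda>x. Dg x / 2) UNIV + infsum (\<lambda>x. (g x)^2) UNIV"
      by (rule infsum_add[OF _ gS])
    also have "infsum (\<lambda>x. Dg x / 2) UNIV = infsum Dg UNIV / 2" unfolding eq infsum_cmult_left' by simp
    finally show ?thesis .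
  qed
  have e4: "infsum Dg UNIV / 2 + infsum (\<lambda>x. (g x)^2) UNIV \<le> (4*W0+1) * infsum (\<lambda>x. (g x)^2) UNIV"
  proof -
    have S0: "0 \<le> infsum (\<lambda>x. (g x)^2) UNIV" by (rule infsum_nonneg) auto
    have A: "infsum Dg UNIV \<le> 4 * W0 * infsum (\<lambda>x. (g x)^2) UNIV" using c(3) unfolding Dg_def .
    have B: "0 \<le> W0 * infsum (\<lambda>x. (g x)^2) UNIV" using wok_W0[OF w] S0 by simp
    have "(4*W0+1) * infsum (\<lambda>x. (g x)^2) UNIV = 4 * W0 * infsum (\<lambda>x. (g x)^2) UNIV + infsum (\<lambda>x. (g x)^2) UNIV"
      by (simp add: distrib_right)
    thus ?thesis using A B by linarith
  qed
  show ?thesis unfolding e1 e2 e3 using e4 by (rule ennreal_leI)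
qed

definition boxset :: "nat \<Rightarrow> ('d::finite lat) set" where
  "boxset n = {x. \<forall>i. \<bar>x$i\<bar> \<le> int n}"

lemma finite_boxset: "finite (boxset n :: ('d::finite lat) set)"
proof -
  have "(boxset n :: 'd lat set) \<subseteq> vec_lambda ` (Pi\<^sub>E UNIV (\<lambda>_. {-int n..int n}))"
  proof
    fix x :: "'d lat" assume x: "x \<in> boxset n"
    have "x$i \<in> {-int n..int n}" for i
    proof -
      have "\<bar>x$i\<bar> \<le> int n" using x unfolding boxset_def by blast
      thus ?thesis by auto
    qed
    hence "vec_nth x \<in> Pi\<^sub>E UNIV (\<lambda>_. {-int n..int n})"
      by (simp add: PiE_UNIV_domain)
    moreover have "x = vec_lambda (vec_nth x)" by simp
    ultimately show "x \<in> vec_lambda ` (Pi\<^sub>E UNIV (\<lambda>_. {-int n..int n}))" by blast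
  qed
  moreover have "finite (Pi\<^sub>E (UNIV::'d set) (\<lambda>_. {-int n..int n}))" by (intro finite_PiE) auto
  ultimately show ?thesis using finite_surj by blast
qed

lemma boxset_cofinal:
  fixes X :: "('d::finite lat) set"
  assumes "finite X"
  shows "\<exists>N. \<forall>n\<ge>N. X \<subseteq> boxset n"
proof -
  define m where "m x = nat (\<Sum>i\<in>UNIV. \<bar>x$i\<bar>)" for x :: "'d lat"
  define N where "N = (\<Sum>x\<in>X. m x)"
  have "X \<subseteq> boxset n" if "n \<ge> N" for n
  proof
    fix x assume xX: "x \<in> X"
    have mN: "m x \<le> N" unfolding N_def using assms xX by (intro member_le_sum) auto
    show "x \<in> boxset n" unfolding boxset_def
    proof (intro CollectI allI)
      fix i
      have "\<bar>x$i\<bar> \<le> (\<Sum>i\<in>UNIV. \<bar>x$i\<bar>)" by (rule member_le_sum) auto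
      also have "\<dots> = int (m x)" unfolding m_def by (simp add: sum_nonneg)
      also have "\<dots> \<le> int n" using mN that by simp
      finally show "\<bar>x$i\<bar> \<le> int n" .
    qed
  qed
  thus ?thesis by blast
qed

lemma l2_W:
  fixes w :: "'d::finite lat \<Rightarrow> 'd lat \<Rightarrow> real" and g :: "'d lat \<Rightarrow> real"
  assumes w: "wok w W0" and gS: "(\<lambda>x. (g x)^2) summable_on UNIV"
  shows "g \<in> W_space w"
proof -
  define S where "S = infsum (\<lambda>x. (g x)^2) UNIV"
  define \<phi> where "\<phi> n x = (if x \<in> boxset n then g x else 0)" for n x
  define e where "e n x = \<phi> n x - g x" for n x
  have fin: "finite {x. \<phi> n x \<noteq> 0}" for n
    by (rule finite_subset[OF _ finite_boxset[of n]]) (auto simp: \<phi>_def)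
  have esq: "(e n x)^2 = (if x \<in> boxset n then 0 else (g x)^2)" for n x
    by (simp add: e_def \<phi>_def)
  have eS: "(\<lambda>x. (e n x)^2) summable_on UNIV" for n
    by (rule summable_bound[OF gS]) (simp add: esq)
  have esum: "infsum (\<lambda>x. (e n x)^2) UNIV = S - sum (\<lambda>x. (g x)^2) (boxset n)" for n
  proof -
    have "infsum (\<lambda>x. (e n x)^2) UNIV = infsum (\<lambda>x. (g x)^2) (UNIV - boxset n)"
      by (rule infsum_cong_neutral) (auto simp: esq)
    also have "\<dots> = S - infsum (\<lambda>x. (g x)^2) (boxset n)"
      unfolding S_def by (rule infsum_Diff[OF gS]) (use finite_boxset in \<open>auto intro: summable_on_finite\<close>)
    also have "infsum (\<lambda>x. (g x)^2) (boxset n) = sum (\<lambda>x. (g x)^2) (boxset n)" by (rule infsum_finite[OF finite_boxset])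
    finally show ?thesis .
  qed
  have lim1: "(\<lambda>n. sum (\<lambda>x. (g x)^2) (boxset n)) \<longlonglongrightarrow> S"
  proof -
    have "filterlim (boxset :: nat \<Rightarrow> 'd lat set) (finite_subsets_at_top UNIV) sequentially"
      unfolding filterlim_finite_subsets_at_top
    proof (intro allI impI)
      fix X :: "'d lat set" assume "finite X \<and> X \<subseteq> UNIV"
      then obtain N where "\<forall>n\<ge>N. X \<subseteq> boxset n" using boxset_cofinal by blast
      thus "\<forall>\<^sub>F n in sequentially. finite (boxset n) \<and> X \<subseteq> boxset n \<and> boxset n \<subseteq> UNIV"
        using finite_boxset unfolding eventually_sequentially by blast
    qed
    moreover have "(sum (\<lambda>x. (g x)^2) \<longlongrightarrow> S) (finite_subsets_at_top UNIV)"
      unfolding S_def by (rule infsum_tendsto[OF gS])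
    ultimately show ?thesis by (rule filterlim_compose[rotated])
  qed
  have lim2: "(\<lambda>n. ennreal ((4*W0+1) * infsum (\<lambda>x. (e n x)^2) UNIV)) \<longlonglongrightarrow> 0"
  proof -
    have "(\<lambda>n. S - sum (\<lambda>x. (g x)^2) (boxset n)) \<longlonglongrightarrow> S - S"
      by (intro tendsto_diff tendsto_const lim1)
    hence "(\<lambda>n. (4*W0+1) * (S - sum (\<lambda>x. (g x)^2) (boxset n))) \<longlonglongrightarrow> (4*W0+1) * 0"
      by (intro tendsto_mult_left) simp
    hence "(\<lambda>n. ennreal ((4*W0+1) * (S - sum (\<lambda>x. (g x)^2) (boxset n)))) \<longlonglongrightarrow> ennreal ((4*W0+1) * 0)"
      by (rule tendsto_ennrealI)
    thus ?thesis by (simp add: esum)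
  qed
  have "(\<lambda>n. W_norm_sq w (\<lambda>x. \<phi> n x - g x)) \<longlonglongrightarrow> 0"
  proof (rule tendsto_sandwich[OF _ _ tendsto_const lim2])
    show "\<forall>\<^sub>F n in sequentially. 0 \<le> W_norm_sq w (\<lambda>x. \<phi> n x - g x)" by simp
    show "\<forall>\<^sub>F n in sequentially. W_norm_sq w (\<lambda>x. \<phi> n x - g x) \<le> ennreal ((4*W0+1) * infsum (\<lambda>x. (e n x)^2) UNIV)"
      using Wnorm_bound[OF w eS] unfolding e_def by simp
  qed
  thus ?thesis unfolding W_space_def using fin by blast
qed

lemma powr_sq: "x \<noteq> 0 \<Longrightarrow> \<bar>x::real\<bar> powr 2 = x^2"
proof -
  assume "x \<noteq> 0"
  hence "\<bar>x\<bar> powr (real 2) = \<bar>x\<bar>^2" by (intro powr_realpow) auto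
  thus ?thesis by simp
qed

lemma nonlin_scale:
  fixes c y p :: real
  assumes "c > 0"
  shows "nonlin p (c*y) * (c*y) = c powr p * (\<bar>y\<bar> powr p * ln (c^2)) + c powr p * (\<bar>y\<bar> powr p * ln (y^2))"
proof (cases "y = 0")
  case True thus ?thesis by (simp add: nonlin_def)
next
  case False
  have cy: "c*y \<noteq> 0" using assms False by simp
  have a: "\<bar>c*y\<bar> = c * \<bar>y\<bar>" using assms by (simp add: abs_mult)
  have e1: "nonlin p (c*y) * (c*y) = \<bar>c*y\<bar> powr (p-2) * (c*y)^2 * ln ((c*y)^2)"
    using cy by (simp add: nonlin_def power2_eq_square)
  have e2: "\<bar>c*y\<bar> powr (p-2) * (c*y)^2 = \<bar>c*y\<bar> powr p"
  proof -
    have "\<bar>c*y\<bar> powr (p-2) * (c*y)^2 = \<bar>c*y\<bar> powr (p-2) * \<bar>c*y\<bar> powr 2" using powr_sq[OF cy] by simp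
    also have "\<dots> = \<bar>c*y\<bar> powr p" by (subst powr_add[symmetric]) simp
    finally show ?thesis .
  qed
  have e3: "\<bar>c*y\<bar> powr p = c powr p * \<bar>y\<bar> powr p" using a assms by (simp add: powr_mult)
  have e4: "ln ((c*y)^2) = ln (c^2) + ln (y^2)"
    using assms False by (simp add: power_mult_distrib ln_mult)
  show ?thesis unfolding e1 e2 e3 e4 by (simp add: algebra_simps)
qed

lemma ln_small:
  fixes y q :: real
  assumes "0 < y" "y < 1" "q > 0"
  shows "y powr q * \<bar>ln (y^2)\<bar> \<le> 2 / q"
proof -
  have l: "ln (y^2) = - 2 * ln (1/y)" using assms by (simp add: ln_realpow ln_div)
  have pos: "0 < ln (1/y)" using assms by simp
  have "ln ((1/y) powr q) \<le> (1/y) powr q - 1" by (rule ln_le_minus_one) (use assms in simp)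
  hence "q * ln (1/y) \<le> (1/y) powr q" using assms by (simp add: ln_powr)
  hence "y powr q * (q * ln (1/y)) \<le> y powr q * (1/y) powr q" by (intro mult_left_mono) auto
  also have "y powr q * (1/y) powr q = 1" using assms by (simp add: powr_divide powr_one_eq_one)
  finally have "y powr q * ln (1/y) \<le> 1 / q" using assms by (simp add: field_simps)
  thus ?thesis using l pos assms by (simp add: abs_mult)
qed

lemma ln_big:
  fixes y q M :: real
  assumes "1 \<le> y" "y \<le> M" "q > 0"
  shows "y powr q * \<bar>ln (y^2)\<bar> \<le> M powr q * (2*M)"
proof -
  have "0 \<le> ln (y^2)" using assms by simp
  moreover have "ln (y^2) \<le> 2*M" using assms ln_le_minus_one[of y] by (simp add: ln_realpow)
  moreover have "y powr q \<le> M powr q" using assms by (intro powr_mono2) auto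
  ultimately show ?thesis by (intro mult_mono) auto
qed

lemma ln_bound:
  fixes y q M :: real
  assumes "\<bar>y\<bar> \<le> M" "1 \<le> M" "q > 0"
  shows "\<bar>y\<bar> powr q * \<bar>ln (y^2)\<bar> \<le> 2/q + M powr q * (2*M)"
proof -
  have nn: "0 \<le> M powr q * (2*M)" using assms by simp
  have nn2: "0 \<le> 2/q" using assms by simp
  consider "y = 0" | "0 < \<bar>y\<bar>" "\<bar>y\<bar> < 1" | "1 \<le> \<bar>y\<bar>" by linarith
  thus ?thesis
  proof cases
    case 1 thus ?thesis using nn nn2 by simp
  next
    case 2
    have "\<bar>y\<bar> powr q * \<bar>ln (\<bar>y\<bar>^2)\<bar> \<le> 2/q" using ln_small[OF 2 assms(3)] .
    thus ?thesis using nn by (simp only: power2_abs; linarith)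
  next
    case 3
    have "\<bar>y\<bar> powr q * \<bar>ln (\<bar>y\<bar>^2)\<bar> \<le> M powr q * (2*M)" using ln_big[OF 3 assms(1,3)] .
    thus ?thesis using nn2 by (simp only: power2_abs; linarith)
  qed
qed

lemma powr_summ:
  fixes f :: "'a \<Rightarrow> real"
  assumes fS: "(\<lambda>x. (f x)^2) summable_on UNIV" and p: "p > 2"
  shows "(\<lambda>x. \<bar>f x\<bar> powr p) summable_on UNIV"
    and "(\<lambda>x. \<bar>f x\<bar> powr p * ln ((f x)^2)) summable_on UNIV"
proof -
  define S where "S = infsum (\<lambda>x. (f x)^2) UNIV"
  define M where "M = max 1 (sqrt S)"
  have M1: "1 \<le> M" by (simp add: M_def)
  have fM: "\<bar>f x\<bar> \<le> M" for x
  proof -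
    have "(f x)^2 \<le> S" unfolding S_def by (rule le_infsum_single[OF _ fS]) auto
    hence "sqrt ((f x)^2) \<le> sqrt S" by (rule real_sqrt_le_mono)
    thus ?thesis by (simp add: M_def)
  qed
  have split: "\<bar>f x\<bar> powr p = (f x)^2 * \<bar>f x\<bar> powr (p-2)" for x
  proof (cases "f x = 0")
    case True thus ?thesis using p by simp
  next
    case False
    have "\<bar>f x\<bar> powr p = \<bar>f x\<bar> powr 2 * \<bar>f x\<bar> powr (p-2)" by (subst powr_add[symmetric]) simp
    also have "\<bar>f x\<bar> powr 2 = (f x)^2" using False by (simp add: powr_sq)
    finally show ?thesis .
  qed
  show "(\<lambda>x. \<bar>f x\<bar> powr p) summable_on UNIV"
  proof (rule summable_bound)
    show "(\<lambda>x. (f x)^2 * M powr (p-2)) summable_on UNIV" by (rule summable_on_cmult_left[OF fS])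
    fix x
    have "\<bar>f x\<bar> powr (p-2) \<le> M powr (p-2)" using fM p by (intro powr_mono2) auto
    hence "(f x)^2 * \<bar>f x\<bar> powr (p-2) \<le> (f x)^2 * M powr (p-2)" by (intro mult_left_mono) auto
    thus "\<bar>\<bar>f x\<bar> powr p\<bar> \<le> (f x)^2 * M powr (p-2)" using split[of x] by simp
  qed
  show "(\<lambda>x. \<bar>f x\<bar> powr p * ln ((f x)^2)) summable_on UNIV"
  proof (rule summable_bound)
    show "(\<lambda>x. (f x)^2 * (2/(p-2) + M powr (p-2) * (2*M))) summable_on UNIV"
      by (rule summable_on_cmult_left[OF fS])
    fix x
    have b: "\<bar>f x\<bar> powr (p-2) * \<bar>ln ((f x)^2)\<bar> \<le> 2/(p-2) + M powr (p-2) * (2*M)"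
      by (rule ln_bound[OF fM M1]) (use p in simp)
    have "\<bar>\<bar>f x\<bar> powr p * ln ((f x)^2)\<bar> = (f x)^2 * (\<bar>f x\<bar> powr (p-2) * \<bar>ln ((f x)^2)\<bar>)"
      using split[of x] by (simp add: abs_mult)
    also have "\<dots> \<le> (f x)^2 * (2/(p-2) + M powr (p-2) * (2*M))" using b by (intro mult_left_mono) auto
    finally show "\<bar>\<bar>f x\<bar> powr p * ln ((f x)^2)\<bar> \<le> (f x)^2 * (2/(p-2) + M powr (p-2) * (2*M))" .
  qed
qed

lemma gp_dom:
  fixes w :: "'a \<Rightarrow> 'a \<Rightarrow> real"
  assumes w: "wok w W0" and uS: "(\<lambda>x. (u x)^2) summable_on UNIV"
    and df: "\<And>x y. \<bar>f x - f y\<bar> \<le> \<bar>u x - u y\<bar>" and dg: "\<And>x y. \<bar>g x - g y\<bar> \<le> \<bar>u x - u y\<bar>"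
  shows "\<And>x. (\<lambda>y. w x y * (f x - f y) * (g x - g y)) summable_on (UNIV - {x})"
    and "(\<lambda>x. (1/2) * infsum (\<lambda>y. w x y * (f x - f y) * (g x - g y)) (UNIV - {x})) summable_on UNIV"
proof -
  note c = wok_core[OF w uS]
  have wnn: "\<And>x y. x \<noteq> y \<Longrightarrow> 0 \<le> w x y" using w unfolding wok_def by (meson less_imp_le)
  have bd: "\<bar>w x y * (f x - f y) * (g x - g y)\<bar> \<le> w x y * (u x - u y)^2" if "y \<in> UNIV - {x}" for x y
  proof -
    have w0: "0 \<le> w x y" using wnn that by auto
    have "\<bar>(f x - f y) * (g x - g y)\<bar> \<le> \<bar>u x - u y\<bar> * \<bar>u x - u y\<bar>"
      unfolding abs_mult by (intro mult_mono df dg) auto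
    also have "\<dots> = (u x - u y)^2" by (simp add: power2_eq_square abs_mult_self_eq)
    finally have "w x y * \<bar>(f x - f y) * (g x - g y)\<bar> \<le> w x y * (u x - u y)^2"
      using w0 by (intro mult_left_mono) auto
    thus ?thesis using w0 by (simp add: abs_mult mult.assoc)
  qed
  show s1: "(\<lambda>y. w x y * (f x - f y) * (g x - g y)) summable_on (UNIV - {x})" for x
    by (rule summable_bound[OF c(1)]) (rule bd)
  show "(\<lambda>x. (1/2) * infsum (\<lambda>y. w x y * (f x - f y) * (g x - g y)) (UNIV - {x})) summable_on UNIV"
  proof (rule summable_bound)
    show "(\<lambda>x. (1/2) * infsum (\<lambda>y. w x y * (u x - u y)^2) (UNIV - {x})) summable_on UNIV"
      by (rule summable_on_cmult_right[OF c(2)])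
    fix x
    have sa: "(\<lambda>y. \<bar>w x y * (f x - f y) * (g x - g y)\<bar>) summable_on (UNIV - {x})"
      by (rule summable_bound[OF c(1)]) (use bd in auto)
    have "\<bar>infsum (\<lambda>y. w x y * (f x - f y) * (g x - g y)) (UNIV - {x})\<bar>
        \<le> infsum (\<lambda>y. \<bar>w x y * (f x - f y) * (g x - g y)\<bar>) (UNIV - {x})"
      using norm_infsum_bound[of "\<lambda>y. w x y * (f x - f y) * (g x - g y)" "UNIV - {x}"] sa by simp
    also have "\<dots> \<le> infsum (\<lambda>y. w x y * (u x - u y)^2) (UNIV - {x})"
      by (rule infsum_mono[OF sa c(1)]) (rule bd)
    finally show "\<bar>(1/2) * infsum (\<lambda>y. w x y * (f x - f y) * (g x - g y)) (UNIV - {x})\<bar>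
        \<le> (1/2) * infsum (\<lambda>y. w x y * (u x - u y)^2) (UNIV - {x})" by (simp add: abs_mult)
  qed
qed

lemma gp_expand:
  fixes w :: "'d::finite lat \<Rightarrow> 'd lat \<Rightarrow> real"
  assumes sPP: "(\<lambda>y. w x y * (P x - P y) * (P x - P y)) summable_on (UNIV - {x})"
    and sPQ: "(\<lambda>y. w x y * (P x - P y) * (Q x - Q y)) summable_on (UNIV - {x})"
    and sQP: "(\<lambda>y. w x y * (Q x - Q y) * (P x - P y)) summable_on (UNIV - {x})"
    and sQQ: "(\<lambda>y. w x y * (Q x - Q y) * (Q x - Q y)) summable_on (UNIV - {x})"
  shows "grad_prod w (\<lambda>z. a1 * P z + a2 * Q z) (\<lambda>z. b1 * P z + b2 * Q z) x
    = a1*b1 * grad_prod w P P x + a1*b2 * grad_prod w P Q x + a2*b1 * grad_prod w Q P x + a2*b2 * grad_prod w Q Q x"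
proof -
  define I where "I f g = infsum (\<lambda>y. w x y * (f x - f y) * (g x - g y)) (UNIV - {x})" for f g
  have hs: "((\<lambda>y. a1*b1 * (w x y * (P x - P y) * (P x - P y)) + a1*b2 * (w x y * (P x - P y) * (Q x - Q y))
      + a2*b1 * (w x y * (Q x - Q y) * (P x - P y)) + a2*b2 * (w x y * (Q x - Q y) * (Q x - Q y)))
      has_sum (a1*b1 * I P P + a1*b2 * I P Q + a2*b1 * I Q P + a2*b2 * I Q Q)) (UNIV - {x})"
    unfolding I_def
    by (intro has_sum_add has_sum_cmult_right has_sum_infsum sPP sPQ sQP sQQ)
  have eq: "w x y * ((a1 * P x + a2 * Q x) - (a1 * P y + a2 * Q y)) * ((b1 * P x + b2 * Q x) - (b1 * P y + b2 * Q y))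
    = a1*b1 * (w x y * (P x - P y) * (P x - P y)) + a1*b2 * (w x y * (P x - P y) * (Q x - Q y))
      + a2*b1 * (w x y * (Q x - Q y) * (P x - P y)) + a2*b2 * (w x y * (Q x - Q y) * (Q x - Q y))" for y
    by (simp add: algebra_simps)
  have "infsum (\<lambda>y. w x y * ((a1 * P x + a2 * Q x) - (a1 * P y + a2 * Q y)) * ((b1 * P x + b2 * Q x) - (b1 * P y + b2 * Q y))) (UNIV - {x})
     = a1*b1 * I P P + a1*b2 * I P Q + a2*b1 * I Q P + a2*b2 * I Q Q"
    unfolding eq by (rule infsumI[OF hs])
  thus ?thesis unfolding grad_prod_def I_def by (simp add: algebra_simps)
qed

lemma Jderiv_expand:
  fixes w :: "'d::finite lat \<Rightarrow> 'd lat \<Rightarrow> real" and h P Q u :: "'d lat \<Rightarrow> real"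
  assumes w: "wok w W0" and uS: "(\<lambda>x. (u x)^2) summable_on UNIV"
    and hu: "(\<lambda>x. h x * (u x)^2) summable_on UNIV" and hnn: "\<And>x. 0 \<le> h x"
    and dP: "\<And>x y. \<bar>P x - P y\<bar> \<le> \<bar>u x - u y\<bar>" and dQ: "\<And>x y. \<bar>Q x - Q y\<bar> \<le> \<bar>u x - u y\<bar>"
    and PQ: "\<And>x. P x * Q x = 0" and Pu: "\<And>x. (P x)^2 \<le> (u x)^2" and Qu: "\<And>x. (Q x)^2 \<le> (u x)^2"
  shows "Jderiv a b p w h (\<lambda>z. a1 * P z + a2 * Q z) (\<lambda>z. b1 * P z + b2 * Q z)
     = a * (a1*b1*infsum (grad_prod w P P) UNIV + a1*b2*infsum (grad_prod w P Q) UNIV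
            + a2*b1*infsum (grad_prod w Q P) UNIV + a2*b2*infsum (grad_prod w Q Q) UNIV)
       + (a1*b1*infsum (\<lambda>x. h x * (P x)^2) UNIV + a2*b2*infsum (\<lambda>x. h x * (Q x)^2) UNIV)
       + b * (a1*a1*infsum (grad_prod w P P) UNIV + a1*a2*infsum (grad_prod w P Q) UNIV
            + a2*a1*infsum (grad_prod w Q P) UNIV + a2*a2*infsum (grad_prod w Q Q) UNIV)
           * (a1*b1*infsum (grad_prod w P P) UNIV + a1*b2*infsum (grad_prod w P Q) UNIV
            + a2*b1*infsum (grad_prod w Q P) UNIV + a2*b2*infsum (grad_prod w Q Q) UNIV)
       - infsum (\<lambda>x. nonlin p (a1 * P x + a2 * Q x) * (b1 * P x + b2 * Q x)) UNIV"
proof -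
  define A where "A = infsum (grad_prod w P P) UNIV"
  define B where "B = infsum (grad_prod w Q Q) UNIV"
  define G1 where "G1 = infsum (grad_prod w P Q) UNIV"
  define G2 where "G2 = infsum (grad_prod w Q P) UNIV"
  define HP where "HP = infsum (\<lambda>x. h x * (P x)^2) UNIV"
  define HQ where "HQ = infsum (\<lambda>x. h x * (Q x)^2) UNIV"
  note PP = gp_dom[OF w uS dP dP] and PQd = gp_dom[OF w uS dP dQ]
    and QP = gp_dom[OF w uS dQ dP] and QQ = gp_dom[OF w uS dQ dQ]
  have gs: "grad_prod w P P summable_on UNIV" "grad_prod w P Q summable_on UNIV"
       "grad_prod w Q P summable_on UNIV" "grad_prod w Q Q summable_on UNIV"
    unfolding grad_prod_def[abs_def] using PP(2) PQd(2) QP(2) QQ(2) by auto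
  have gexp: "grad_prod w (\<lambda>z. c1 * P z + c2 * Q z) (\<lambda>z. d1 * P z + d2 * Q z) x
    = c1*d1 * grad_prod w P P x + c1*d2 * grad_prod w P Q x + c2*d1 * grad_prod w Q P x + c2*d2 * grad_prod w Q Q x"
    for c1 c2 d1 d2 x
    by (rule gp_expand[OF PP(1) PQd(1) QP(1) QQ(1)])
  have Gsum: "((\<lambda>x. grad_prod w (\<lambda>z. c1 * P z + c2 * Q z) (\<lambda>z. d1 * P z + d2 * Q z) x)
     has_sum (c1*d1*A + c1*d2*G1 + c2*d1*G2 + c2*d2*B)) UNIV" for c1 c2 d1 d2
    unfolding gexp A_def B_def G1_def G2_def
    by (intro has_sum_add has_sum_cmult_right has_sum_infsum gs)
  have N: "grad_norm_sq w (\<lambda>z. a1 * P z + a2 * Q z) = a1*a1*A + a1*a2*G1 + a2*a1*G2 + a2*a2*B"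
    unfolding grad_norm_sq_def by (rule infsumI[OF Gsum])
  have G: "(\<Sum>\<^sub>\<infinity>x\<in>UNIV. grad_prod w (\<lambda>z. a1 * P z + a2 * Q z) (\<lambda>z. b1 * P z + b2 * Q z) x)
     = a1*b1*A + a1*b2*G1 + a2*b1*G2 + a2*b2*B"
    by (rule infsumI[OF Gsum])
  have hP: "(\<lambda>x. h x * (P x)^2) summable_on UNIV"
    by (rule summable_bound[OF hu]) (simp add: hnn Pu mult_left_mono)
  have hQ: "(\<lambda>x. h x * (Q x)^2) summable_on UNIV"
    by (rule summable_bound[OF hu]) (simp add: hnn Qu mult_left_mono)
  have heq: "h x * (a1 * P x + a2 * Q x) * (b1 * P x + b2 * Q x) = a1*b1*(h x * (P x)^2) + a2*b2*(h x * (Q x)^2)" for x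
  proof -
    have "h x * (a1 * P x + a2 * Q x) * (b1 * P x + b2 * Q x)
       = a1*b1*(h x * (P x)^2) + a2*b2*(h x * (Q x)^2) + (a1*b2 + a2*b1) * (h x * (P x * Q x))"
      by (simp add: algebra_simps power2_eq_square)
    thus ?thesis using PQ[of x] by simp
  qed
  have first: "((\<lambda>x. a * grad_prod w (\<lambda>z. a1 * P z + a2 * Q z) (\<lambda>z. b1 * P z + b2 * Q z) x
        + h x * (a1 * P x + a2 * Q x) * (b1 * P x + b2 * Q x))
      has_sum (a * (a1*b1*A + a1*b2*G1 + a2*b1*G2 + a2*b2*B) + (a1*b1*HP + a2*b2*HQ))) UNIV"
    unfolding heq HP_def HQ_def
    by (intro has_sum_add has_sum_cmult_right has_sum_infsum hP hQ Gsum)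
  show ?thesis
    unfolding Jderiv_def infsumI[OF first] N G
    unfolding A_def B_def G1_def G2_def HP_def HQ_def ..
qed

lemma gp_comm: "grad_prod w f g x = grad_prod w g f x"
  unfolding grad_prod_def by (simp add: algebra_simps)

lemma pn_facts:
  shows "pos_part u x \<ge> 0" "neg_part u x \<le> 0" "pos_part u x * neg_part u x = 0"
    "\<bar>pos_part u x - pos_part u y\<bar> \<le> \<bar>u x - u y\<bar>" "\<bar>neg_part u x - neg_part u y\<bar> \<le> \<bar>u x - u y\<bar>"
    "(pos_part u x)^2 \<le> (u x)^2" "(neg_part u x)^2 \<le> (u x)^2"
  unfolding pos_part_def neg_part_def
  by (auto simp: max_def min_def abs_le_square_iff[symmetric])

lemma posneg_scale:
  assumes "r > 0" "t > 0"
  shows "pos_part (\<lambda>x. r * pos_part u x + t * neg_part u x) = (\<lambda>z. r * pos_part u z + 0 * neg_part u z)"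
    and "neg_part (\<lambda>x. r * pos_part u x + t * neg_part u x) = (\<lambda>z. 0 * pos_part u z + t * neg_part u z)"
  using assms unfolding pos_part_def neg_part_def
  by (auto simp: fun_eq_iff max_def min_def zero_le_mult_iff mult_le_0_iff)

lemma gp_nonneg:
  assumes "\<And>x y. y \<noteq> x \<Longrightarrow> 0 \<le> w x y * (f x - f y) * (g x - g y)"
  shows "0 \<le> infsum (grad_prod w f g) UNIV"
proof (rule infsum_nonneg)
  fix x
  have "0 \<le> infsum (\<lambda>y. w x y * (f x - f y) * (g x - g y)) (UNIV - {x})"
    by (rule infsum_nonneg) (use assms in auto)
  thus "0 \<le> grad_prod w f g x" unfolding grad_prod_def by simp
qed

theorem mainTheorem14:
  fixes s a b p :: real
    and w :: "'d::finite lat \<Rightarrow> 'd lat \<Rightarrow> real"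
    and h u :: "'d lat \<Rightarrow> real"
  assumes "0 < s" "s < 1"
    and "admissible_weight s w"
    and "0 < a" "0 < b" "p > 6"
    and h1: "\<exists>h0>0. \<forall>x. h x \<ge> h0"
    and "u \<in> H_space w h"
    and "pos_part u \<noteq> (\<lambda>_. 0)" "neg_part u \<noteq> (\<lambda>_. 0)"
  shows "\<exists>!(r, t). 0 < r \<and> 0 < t \<and>
           (\<lambda>x. r * pos_part u x + t * neg_part u x) \<in> M_set a b p w h"
proof -
  obtain W0 where W: "\<forall>x. (w x) summable_on (UNIV - {x}) \<and> infsum (w x) (UNIV - {x}) \<le> W0"
    using wsum[OF assms(3) assms(1)] by blast
  have w: "wok w W0" unfolding wok_def using assms(3) W unfolding admissible_weight_def by blast
  obtain h0 where h0: "h0 > 0" "\<And>x. h x \<ge> h0" using h1 by blast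
  have hnn: "0 \<le> h x" for x using h0(1) h0(2)[of x] by linarith
  have hu: "(\<lambda>x. h x * (u x)^2) summable_on UNIV"
  proof (rule enn_summable)
    show "\<And>x. x \<in> UNIV \<Longrightarrow> 0 \<le> h x * (u x)^2" using hnn by simp
    show "(\<Sum>\<^sub>\<infinity>x\<in>UNIV. ennreal (h x * (u x)^2)) \<noteq> \<infinity>" using assms(8) unfolding H_space_def by auto
  qed
  have uS: "(\<lambda>x. (u x)^2) summable_on UNIV"
  proof (rule summable_bound[OF summable_on_cmult_right[OF hu, of "1/h0"]])
    fix x
    have "h0 * (u x)^2 \<le> h x * (u x)^2" using h0(2)[of x] by (intro mult_right_mono) auto
    hence "(u x)^2 \<le> (1/h0) * (h x * (u x)^2)" using h0(1) by (simp add: field_simps)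
    thus "\<bar>(u x)^2\<bar> \<le> 1 / h0 * (h x * (u x)^2)" by simp
  qed
  define P where "P = pos_part u"
  define Q where "Q = neg_part u"
  have Pnn: "\<And>x. P x \<ge> 0" and Qnp: "\<And>x. Q x \<le> 0" and PQ: "\<And>x. P x * Q x = 0"
    and dP: "\<And>x y. \<bar>P x - P y\<bar> \<le> \<bar>u x - u y\<bar>" and dQ: "\<And>x y. \<bar>Q x - Q y\<bar> \<le> \<bar>u x - u y\<bar>"
    and Pu: "\<And>x. (P x)^2 \<le> (u x)^2" and Qu: "\<And>x. (Q x)^2 \<le> (u x)^2"
    unfolding P_def Q_def using pn_facts by blast+
  have PS: "(\<lambda>x. (P x)^2) summable_on UNIV" by (rule summable_bound[OF uS]) (simp add: Pu)
  have QS: "(\<lambda>x. (Q x)^2) summable_on UNIV" by (rule summable_bound[OF uS]) (simp add: Qu)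
  have p2: "p > 2" using assms(6) by simp
  note PP = powr_summ[OF PS p2] and QQ = powr_summ[OF QS p2]
  define A where "A = infsum (grad_prod w P P) UNIV"
  define B where "B = infsum (grad_prod w Q Q) UNIV"
  define G where "G = infsum (grad_prod w Q P) UNIV"
  define HP where "HP = infsum (\<lambda>x. h x * (P x)^2) UNIV"
  define HQ where "HQ = infsum (\<lambda>x. h x * (Q x)^2) UNIV"
  define SP where "SP = infsum (\<lambda>x. \<bar>P x\<bar> powr p) UNIV"
  define LP where "LP = infsum (\<lambda>x. \<bar>P x\<bar> powr p * ln ((P x)^2)) UNIV"
  define SQ where "SQ = infsum (\<lambda>x. \<bar>Q x\<bar> powr p) UNIV"
  define LQ where "LQ = infsum (\<lambda>x. \<bar>Q x\<bar> powr p * ln ((Q x)^2)) UNIV"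
  have "grad_prod w P Q = grad_prod w Q P" by (rule ext) (rule gp_comm)
  hence G1: "infsum (grad_prod w P Q) UNIV = G" unfolding G_def by simp
  note JE = Jderiv_expand[OF w uS hu hnn dP dQ PQ Pu Qu]
  have NP: "infsum (\<lambda>x. nonlin p (r * P x + t * Q x) * (r * P x + 0 * Q x)) UNIV = r powr p * (SP * ln (r^2) + LP)"
    if "r > 0" for r t
  proof -
    have pw: "nonlin p (r * P x + t * Q x) * (r * P x + 0 * Q x)
        = r powr p * (\<bar>P x\<bar> powr p * ln (r^2)) + r powr p * (\<bar>P x\<bar> powr p * ln ((P x)^2))" for x
    proof (cases "P x = 0")
      case True thus ?thesis using p2 by simp
    next
      case False
      hence "Q x = 0" using PQ[of x] by simp
      hence "nonlin p (r * P x + t * Q x) * (r * P x + 0 * Q x) = nonlin p (r * P x) * (r * P x)" by simp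
      thus ?thesis using nonlin_scale[OF that] by simp
    qed
    have "((\<lambda>x. r powr p * (\<bar>P x\<bar> powr p * ln (r^2)) + r powr p * (\<bar>P x\<bar> powr p * ln ((P x)^2)))
        has_sum (r powr p * (SP * ln (r^2)) + r powr p * LP)) UNIV"
      unfolding SP_def LP_def
      by (intro has_sum_add has_sum_cmult_right has_sum_cmult_left has_sum_infsum PP)
    thus ?thesis unfolding pw by (simp add: infsumI algebra_simps)
  qed
  have NQ: "infsum (\<lambda>x. nonlin p (r * P x + t * Q x) * (0 * P x + t * Q x)) UNIV = t powr p * (SQ * ln (t^2) + LQ)"
    if "t > 0" for r t
  proof -
    have pw: "nonlin p (r * P x + t * Q x) * (0 * P x + t * Q x)
        = t powr p * (\<bar>Q x\<bar> powr p * ln (t^2)) + t powr p * (\<bar>Q x\<bar> powr p * ln ((Q x)^2))" for x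
    proof (cases "Q x = 0")
      case True thus ?thesis using p2 by simp
    next
      case False
      hence "P x = 0" using PQ[of x] by simp
      hence "nonlin p (r * P x + t * Q x) * (0 * P x + t * Q x) = nonlin p (t * Q x) * (t * Q x)" by simp
      thus ?thesis using nonlin_scale[OF that] by simp
    qed
    have "((\<lambda>x. t powr p * (\<bar>Q x\<bar> powr p * ln (t^2)) + t powr p * (\<bar>Q x\<bar> powr p * ln ((Q x)^2)))
        has_sum (t powr p * (SQ * ln (t^2)) + t powr p * LQ)) UNIV"
      unfolding SQ_def LQ_def
      by (intro has_sum_add has_sum_cmult_right has_sum_cmult_left has_sum_infsum QQ)
    thus ?thesis unfolding pw by (simp add: infsumI algebra_simps)
  qed
  have char: "(\<lambda>x. r * P x + t * Q x) \<in> M_set a b p w h \<longleftrightarrow>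
      phi p a b A B G HP SP LP r t = 0 \<and> phi p a b B A G HQ SQ LQ t r = 0"
    if r: "r > 0" and t: "t > 0" for r t
  proof -
    define v where "v = (\<lambda>x. r * P x + t * Q x)"
    have pv: "pos_part v = (\<lambda>z. r * P z + 0 * Q z)" and nv: "neg_part v = (\<lambda>z. 0 * P z + t * Q z)"
      unfolding v_def P_def Q_def using posneg_scale[OF r t] by auto
    have vsq: "(v x)^2 \<le> (r^2 + t^2) * (u x)^2" for x
    proof -
      have "(v x)^2 = r^2 * (P x)^2 + t^2 * (Q x)^2 + 2 * r * t * (P x * Q x)"
        unfolding v_def by (simp add: power2_eq_square algebra_simps)
      also have "\<dots> = r^2 * (P x)^2 + t^2 * (Q x)^2" using PQ[of x] by simp
      also have "\<dots> \<le> r^2 * (u x)^2 + t^2 * (u x)^2"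
        using Pu[of x] Qu[of x] by (intro add_mono mult_left_mono) auto
      finally show ?thesis by (simp add: algebra_simps)
    qed
    have vS: "(\<lambda>x. (v x)^2) summable_on UNIV"
      by (rule summable_bound[OF summable_on_cmult_right[OF uS, of "r^2+t^2"]]) (simp add: vsq)
    have hvS: "(\<lambda>x. h x * (v x)^2) summable_on UNIV"
    proof (rule summable_bound[OF summable_on_cmult_right[OF hu, of "r^2+t^2"]])
      fix x
      have "h x * (v x)^2 \<le> h x * ((r^2 + t^2) * (u x)^2)" using vsq[of x] hnn[of x] by (rule mult_left_mono)
      thus "\<bar>h x * (v x)^2\<bar> \<le> (r^2 + t^2) * (h x * (u x)^2)" using hnn[of x] by (simp add: algebra_simps)
    qed
    have vH: "v \<in> H_space w h"
      unfolding H_space_def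
    proof (intro CollectI conjI)
      show "v \<in> W_space w" by (rule l2_W[OF w vS])
      have "(\<Sum>\<^sub>\<infinity>x\<in>UNIV. ennreal (h x * (v x)^2)) = ennreal (infsum (\<lambda>x. h x * (v x)^2) UNIV)"
        by (rule enn_infsum[OF _ hvS]) (simp add: hnn)
      thus "(\<Sum>\<^sub>\<infinity>x\<in>UNIV. ennreal (h x * (v x)^2)) < \<infinity>" by simp
    qed
    obtain x0 where x0: "P x0 \<noteq> 0" using assms(9) unfolding P_def by auto
    obtain x1 where x1: "Q x1 \<noteq> 0" using assms(10) unfolding Q_def by auto
    have pvne: "pos_part v \<noteq> (\<lambda>_. 0)" unfolding pv using x0 r by (auto simp: fun_eq_iff)
    have nvne: "neg_part v \<noteq> (\<lambda>_. 0)" unfolding nv using x1 t by (auto simp: fun_eq_iff)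
    have J1: "Jderiv a b p w h v (pos_part v) = phi p a b A B G HP SP LP r t"
    proof -
      have "Jderiv a b p w h v (pos_part v) = Jderiv a b p w h (\<lambda>z. r * P z + t * Q z) (\<lambda>z. r * P z + 0 * Q z)"
        unfolding pv unfolding v_def ..
      also have "\<dots> = a * (r*r*A + r*0*G + t*r*G + t*0*B) + (r*r*HP + t*0*HQ)
          + b * (r*r*A + r*t*G + t*r*G + t*t*B) * (r*r*A + r*0*G + t*r*G + t*0*B)
          - r powr p * (SP * ln (r^2) + LP)"
        unfolding JE NP[OF r] G1 A_def[symmetric] B_def[symmetric] G_def[symmetric] HP_def[symmetric] HQ_def[symmetric] ..
      also have "r*r*A + r*0*G + t*r*G + t*0*B = r^2*A + r*t*G" by (simp add: power2_eq_square mult.commute)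
      also have "r*r*A + r*t*G + t*r*G + t*t*B = r^2*A + 2*r*t*G + t^2*B" by (simp add: power2_eq_square mult.commute)
      also have "r*r*HP + t*0*HQ = r^2*HP" by (simp add: power2_eq_square)
      finally show ?thesis unfolding phi_def by (simp add: algebra_simps)
    qed
    have J2: "Jderiv a b p w h v (neg_part v) = phi p a b B A G HQ SQ LQ t r"
    proof -
      have "Jderiv a b p w h v (neg_part v) = Jderiv a b p w h (\<lambda>z. r * P z + t * Q z) (\<lambda>z. 0 * P z + t * Q z)"
        unfolding nv unfolding v_def ..
      also have "\<dots> = a * (r*0*A + r*t*G + t*0*G + t*t*B) + (r*0*HP + t*t*HQ)
          + b * (r*r*A + r*t*G + t*r*G + t*t*B) * (r*0*A + r*t*G + t*0*G + t*t*B)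
          - t powr p * (SQ * ln (t^2) + LQ)"
        unfolding JE NQ[OF t] G1 A_def[symmetric] B_def[symmetric] G_def[symmetric] HP_def[symmetric] HQ_def[symmetric] ..
      also have "r*0*A + r*t*G + t*0*G + t*t*B = t^2*B + t*r*G" by (simp add: power2_eq_square mult.commute)
      also have "r*r*A + r*t*G + t*r*G + t*t*B = t^2*B + 2*t*r*G + r^2*A" by (simp add: power2_eq_square mult.commute)
      also have "r*0*HP + t*t*HQ = t^2*HQ" by (simp add: power2_eq_square)
      finally show ?thesis unfolding phi_def by (simp add: algebra_simps)
    qed
    show ?thesis
      unfolding v_def[symmetric] M_set_def using vH pvne nvne J1 J2 by auto
  qed
  have wnn: "\<And>x y. x \<noteq> y \<Longrightarrow> 0 \<le> w x y" using w unfolding wok_def by (meson less_imp_le)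
  have A0: "0 \<le> A" unfolding A_def
  proof (rule gp_nonneg)
    fix x y :: "'d lat" assume "y \<noteq> x"
    hence "0 \<le> w x y" using wnn by auto
    thus "0 \<le> w x y * (P x - P y) * (P x - P y)" by (simp add: mult.assoc)
  qed
  have B0: "0 \<le> B" unfolding B_def
  proof (rule gp_nonneg)
    fix x y :: "'d lat" assume "y \<noteq> x"
    hence "0 \<le> w x y" using wnn by auto
    thus "0 \<le> w x y * (Q x - Q y) * (Q x - Q y)" by (simp add: mult.assoc)
  qed
  have G0: "0 \<le> G" unfolding G_def
  proof (rule gp_nonneg)
    fix x y :: "'d lat" assume y: "y \<noteq> x"
    have "(Q x - Q y) * (P x - P y) = (- Q x) * P y + (- Q y) * P x + (P x * Q x) + (P y * Q y)"
      by (simp add: algebra_simps)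
    hence "(Q x - Q y) * (P x - P y) = (- Q x) * P y + (- Q y) * P x"
      using PQ[of x] PQ[of y] by simp
    also have "\<dots> \<ge> 0" using Pnn[of x] Pnn[of y] Qnp[of x] Qnp[of y] by (intro add_nonneg_nonneg mult_nonneg_nonneg) auto
    finally have "0 \<le> (Q x - Q y) * (P x - P y)" .
    thus "0 \<le> w x y * (Q x - Q y) * (P x - P y)" using wnn[of x y] y by (simp add: mult.assoc)
  qed
  obtain x0 where x0: "P x0 \<noteq> 0" using assms(9) unfolding P_def by auto
  obtain x1 where x1: "Q x1 \<noteq> 0" using assms(10) unfolding Q_def by auto
  have hP: "(\<lambda>x. h x * (P x)^2) summable_on UNIV"
    by (rule summable_bound[OF hu]) (simp add: hnn Pu mult_left_mono)
  have hQ: "(\<lambda>x. h x * (Q x)^2) summable_on UNIV"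
    by (rule summable_bound[OF hu]) (simp add: hnn Qu mult_left_mono)
  have HP0: "0 < HP"
  proof -
    have "0 < h x0 * (P x0)^2" using x0 h0(1) h0(2)[of x0] by (intro mult_pos_pos) auto
    also have "\<dots> \<le> HP" unfolding HP_def by (rule le_infsum_single[OF _ hP]) (auto simp: hnn)
    finally show ?thesis .
  qed
  have HQ0: "0 < HQ"
  proof -
    have "0 < h x1 * (Q x1)^2" using x1 h0(1) h0(2)[of x1] by (intro mult_pos_pos) auto
    also have "\<dots> \<le> HQ" unfolding HQ_def by (rule le_infsum_single[OF _ hQ]) (auto simp: hnn)
    finally show ?thesis .
  qed
  have SP0: "0 < SP"
  proof -
    have "0 < \<bar>P x0\<bar> powr p" using x0 by simp
    also have "\<dots> \<le> SP" unfolding SP_def by (rule le_infsum_single[OF _ PP(1)]) auto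
    finally show ?thesis .
  qed
  have SQ0: "0 < SQ"
  proof -
    have "0 < \<bar>Q x1\<bar> powr p" using x1 by simp
    also have "\<dots> \<le> SQ" unfolding SQ_def by (rule le_infsum_single[OF _ QQ(1)]) auto
    finally show ?thesis .
  qed
  have p5: "p \<ge> 5" using assms(6) by simp
  have EU: "\<exists>!(r,t). 0 < r \<and> 0 < t \<and> phi p a b A B G HP SP LP r t = 0 \<and> phi p a b B A G HQ SQ LQ t r = 0"
    by (rule exuniq_sol[OF A0 B0 G0 assms(4) assms(5) HP0 HQ0 SP0 SQ0 p5])
  have eqP: "(\<lambda>(r,t). 0 < r \<and> 0 < t \<and> (\<lambda>x. r * pos_part u x + t * neg_part u x) \<in> M_set a b p w h)
     = (\<lambda>(r,t). 0 < r \<and> 0 < t \<and> phi p a b A B G HP SP LP r t = 0 \<and> phi p a b B A G HQ SQ LQ t r = 0)"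
  proof (intro ext, clarify)
    fix r t :: real
    show "(0 < r \<and> 0 < t \<and> (\<lambda>x. r * pos_part u x + t * neg_part u x) \<in> M_set a b p w h) =
          (0 < r \<and> 0 < t \<and> phi p a b A B G HP SP LP r t = 0 \<and> phi p a b B A G HQ SQ LQ t r = 0)"
      using char[of r t] unfolding P_def Q_def by blast
  qed
  show ?thesis using EU eqP by simp
qed

end
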